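(* Assume $(\mathscr{A}_3)$ and $(\mathscr{A}_{10})$, and suppose $\Vert\widehat\Gamma_D-\Gamma_D\Vert_\infty=o_p(t_D)$. Then \[ A_{3n}:=\frac1n\sum_{j=1}^nC(Y_j)\widehat\Gamma_D^{-1}C(Y_j)-\frac1n\sum_{j=1}^nC_{e_n}(Y_j)\widehat\Gamma_D^{-1}C_{e_n}(Y_j)=O_p\Big(\frac{1}{t_D\sqrt n}\Big) \] (in Hilbert–Schmidt norm).
   Context: Let $\mathcal H=L^2([0,1])$; for $x,y\in\mathcal H$, $x\otimes y$ is the operator $u\mapsto\langle x,u\rangle_{\mathcal H}\,y$; $\Vert\cdot\Vert_{hs}$ is the Hilbert–Schmidt norm and $\Vert\cdot\Vert_\infty$ the operator norm. $X$ is a random element of $\mathcal H$ with $\mathbb E(X)=0$, $Y$ a real random variable with density $f$; $\Gamma=\mathbb E(X\otimes X)$ is non-singular and positive definite. Let $r(y)=\mathbb E(X\mid Y=y)$, $R(y)=\mathbb E(X\otimes X\mid Y=y)$, $m=fr$, $M=fR$, $C=R-r\otimes r$. $(e_n)$ is a sequence of positive reals tending to $0$; $f_{e_n}=\max(f,e_n)$, $r_{e_n}=m/f_{e_n}$, $R_{e_n}=M/f_{e_n}$, $C_{e_n}=R_{e_n}-r_{e_n}\otimes r_{e_n}$. For $D\in\mathbb N^*$, $\Pi_D$ is the orthogonal projector onto the span $S_D$ of the first $D$ elements of an orthonormal basis of $\mathcal H$, $\Gamma_D=\Pi_D\Gamma\Pi_D$, and $t_D$ is the smallest positive eigenvalue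 of $\Gamma_D$. $(X_i,Y_i)_{1\le i\le n}$ is an i.i.d. sample of $(X,Y)$, $\widehat\Gamma_n=n^{-1}\sum_iX_i\otimes X_i$, $\widehat\Pi_D$ is the projector onto an estimate $\widehat S_D$ of $S_D$, and $\widehat\Gamma_D=\widehat\Pi_D\widehat\Gamma_n\widehat\Pi_D$ with pseudo-inverse $\widehat\Gamma_D^{-1}$. Orders are as $n\to\infty$ (with $D\to\infty$). Assumptions: $(\mathscr{A}_3)$ $\mathbb E\Vert X\Vert_{\mathcal H}^4<\infty$; $(\mathscr{A}_{10})$ $\sqrt n\,\mathbb E[\Vert R(Y)\Vert_{hs}^2\mathbf 1_{\{f(Y)<e_n\}}]$, $\sqrt n\,\mathbb E[\Vert R(Y)\Vert_{hs}\Vert r(Y)\Vert_{\mathcal H}^2\mathbf 1_{\{f(Y)<e_n\}}]$ and $\sqrt n\,\mathbb E[\Vert r(Y)\Vert_{\mathcal H}^4\mathbf 1_{\{f(Y)<e_n\}}]$ tend to $0$. *)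

theory Defs
  imports "HOL-Probability.Probability"
begin

definition tens :: "'h::real_inner \<Rightarrow> 'h \<Rightarrow> 'h \<Rightarrow> 'h" where
  "tens x y = (\<lambda>u. inner x u *\<^sub>R y)"

definition hs_norm :: "(nat \<Rightarrow> 'h::real_inner) \<Rightarrow> ('h \<Rightarrow> 'h) \<Rightarrow> ennreal" where
  "hs_norm b T = (if summable (\<lambda>k. (norm (T (b k)))\<^sup>2)
                  then ennreal (sqrt (\<Sum>k. (norm (T (b k)))\<^sup>2)) else \<top>)"

definition proj_first :: "(nat \<Rightarrow> 'h::real_inner) \<Rightarrow> nat \<Rightarrow> 'h \<Rightarrow> 'h" where
  "proj_first b D x = (\<Sum>k<D. inner (b k) x *\<^sub>R b k)"

definition min_pos_eig :: "('h::real_vector \<Rightarrow> 'h) \<Rightarrow> real" where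
  "min_pos_eig T = Inf {c. 0 < c \<and> (\<exists>x. x \<noteq> 0 \<and> T x = c *\<^sub>R x)}"

text \<open>Moore--Penrose pseudo-inverse of a self-adjoint operator with closed (here finite-dim.) range:
  the unique z in range T with T z equal to the orthogonal projection of x onto range T.\<close>
definition pseudo_inv :: "('h::real_inner \<Rightarrow> 'h) \<Rightarrow> 'h \<Rightarrow> 'h" where
  "pseudo_inv T x = (THE z. z \<in> range T \<and> (\<forall>w\<in>range T. inner (T z - x) w = 0))"

definition orth_proj_dim :: "('h::real_inner \<Rightarrow> 'h) \<Rightarrow> nat \<Rightarrow> bool" where
  "orth_proj_dim P d \<longleftrightarrow> (\<exists>B. finite B \<and> independent B \<and> card B = d \<and>
      (\<forall>x. P x \<in> span B \<and> (\<forall>s\<in>span B. inner (x - P x) s = 0)))"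

definition outer_prob_le :: "'w measure \<Rightarrow> 'w set \<Rightarrow> real \<Rightarrow> bool" where
  "outer_prob_le M A \<delta> \<longleftrightarrow> (\<exists>B\<in>sets M. A \<inter> space M \<subseteq> B \<and> measure M B \<le> \<delta>)"

definition small_op :: "'w measure \<Rightarrow> (nat \<Rightarrow> 'w \<Rightarrow> real) \<Rightarrow> (nat \<Rightarrow> real) \<Rightarrow> bool" where
  "small_op M Z a \<longleftrightarrow> (\<forall>\<epsilon>>0. \<forall>\<delta>>0.
      eventually (\<lambda>n. outer_prob_le M {\<omega>. \<epsilon> * a n < \<bar>Z n \<omega>\<bar>} \<delta>) sequentially)"

definition big_Op :: "'w measure \<Rightarrow> (nat \<Rightarrow> 'w \<Rightarrow> ennreal) \<Rightarrow> (nat \<Rightarrow> real) \<Rightarrow> bool" where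
  "big_Op M Z a \<longleftrightarrow> (\<forall>\<delta>>0. \<exists>K.
      eventually (\<lambda>n. outer_prob_le M {\<omega>. ennreal (K * a n) < Z n \<omega>} \<delta>) sequentially)"


definition cond_cov :: "(real \<Rightarrow> 'h \<Rightarrow> 'h) \<Rightarrow> (real \<Rightarrow> 'h::real_inner) \<Rightarrow> real \<Rightarrow> 'h \<Rightarrow> 'h" where
  "cond_cov R r y u = R y u - tens (r y) (r y) u"

text \<open>Truncated versions: with f_e = max f e, m = f r, M = f R:
  r_e = m / f_e, R_e = M / f_e, C_e = R_e - r_e \<otimes> r_e.\<close>
definition r_trunc :: "(real \<Rightarrow> real) \<Rightarrow> real \<Rightarrow> (real \<Rightarrow> 'h::real_inner) \<Rightarrow> real \<Rightarrow> 'h" where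
  "r_trunc f e r y = (f y / max (f y) e) *\<^sub>R r y"
definition R_trunc :: "(real \<Rightarrow> real) \<Rightarrow> real \<Rightarrow> (real \<Rightarrow> 'h \<Rightarrow> 'h::real_inner) \<Rightarrow> real \<Rightarrow> 'h \<Rightarrow> 'h" where
  "R_trunc f e R y u = (f y / max (f y) e) *\<^sub>R R y u"
definition cond_cov_trunc :: "(real \<Rightarrow> real) \<Rightarrow> real \<Rightarrow> (real \<Rightarrow> 'h \<Rightarrow> 'h) \<Rightarrow> (real \<Rightarrow> 'h::real_inner)
    \<Rightarrow> real \<Rightarrow> 'h \<Rightarrow> 'h" where
  "cond_cov_trunc f e R r = cond_cov (R_trunc f e R) (r_trunc f e r)"

definition gamma_D :: "(nat \<Rightarrow> 'h::real_inner) \<Rightarrow> nat \<Rightarrow> ('h \<Rightarrow> 'h) \<Rightarrow> 'h \<Rightarrow> 'h" where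
  "gamma_D b D G = proj_first b D \<circ> G \<circ> proj_first b D"

definition gamma_hat :: "nat \<Rightarrow> (nat \<Rightarrow> 'h::real_inner) \<Rightarrow> 'h \<Rightarrow> 'h" where
  "gamma_hat n xs u = (1 / real n) *\<^sub>R (\<Sum>i<n. tens (xs i) (xs i) u)"

definition avg_sandwich :: "nat \<Rightarrow> (real \<Rightarrow> 'h \<Rightarrow> 'h) \<Rightarrow> ('h \<Rightarrow> 'h) \<Rightarrow> (nat \<Rightarrow> real) \<Rightarrow> 'h \<Rightarrow> 'h::real_vector" where
  "avg_sandwich n A T ys u = (1 / real n) *\<^sub>R (\<Sum>j<n. A (ys j) (T (A (ys j) u)))"

end

theory Submission
  imports Defs
begin

definition pN :: "(nat \<Rightarrow> 'h::real_inner) \<Rightarrow> nat \<Rightarrow> 'h \<Rightarrow> 'h" where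
  "pN b N w = (\<Sum>k<N. inner w (b k) *\<^sub>R b k)"

locale onb =
  fixes b :: "nat \<Rightarrow> 'h::real_inner"
  assumes ON: "\<forall>i j. inner (b i) (b j) = (if i = j then 1 else 0)"
begin

lemma inner_sumb: "inner (\<Sum>k<N. c k *\<^sub>R b k) (b j) = (if j < N then c j else 0)"
proof -
  have "inner (\<Sum>k<N. c k *\<^sub>R b k) (b j) = (\<Sum>k<N. c k * (if k = j then 1 else 0))"
    by (simp add: inner_sum_left ON)
  also have "\<dots> = (\<Sum>k<N. if k = j then c k else 0)"
    by (intro sum.cong) auto
  also have "\<dots> = (if j < N then c j else 0)" by (simp add: sum.delta')
  finally show ?thesis .
qed

lemma inner_pN_b: "inner (pN b N w) (b j) = (if j < N then inner w (b j) else 0)"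
  unfolding pN_def by (rule inner_sumb)

lemma inner_pN_pN: "inner (pN b N w) (pN b N w) = (\<Sum>k<N. (inner w (b k))\<^sup>2)"
proof -
  have "inner (pN b N w) (pN b N w) = (\<Sum>k<N. inner w (b k) * inner (pN b N w) (b k))"
    unfolding pN_def[of b N w] by (simp add: inner_sum_right inner_commute[of _ "pN b N w"] pN_def)
  also have "\<dots> = (\<Sum>k<N. (inner w (b k))\<^sup>2)"
    by (intro sum.cong) (auto simp: inner_pN_b power2_eq_square)
  finally show ?thesis .
qed

lemma inner_w_pN: "inner w (pN b N w) = (\<Sum>k<N. (inner w (b k))\<^sup>2)"
  unfolding pN_def by (simp add: inner_sum_right power2_eq_square)

lemma norm_diff_pN: "(norm (w - pN b N w))\<^sup>2 = (norm w)\<^sup>2 - (\<Sum>k<N. (inner w (b k))\<^sup>2)"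
proof -
  have "(norm (w - pN b N w))\<^sup>2 = inner w w - 2 * inner w (pN b N w) + inner (pN b N w) (pN b N w)"
    by (simp add: power2_norm_eq_inner inner_diff_left inner_diff_right inner_commute)
  then show ?thesis by (simp add: inner_pN_pN inner_w_pN power2_norm_eq_inner)
qed

lemma bessel: "(\<Sum>k<N. (inner w (b k))\<^sup>2) \<le> (norm w)\<^sup>2"
  using norm_diff_pN[of w N] by (metis diff_ge_0_iff_ge zero_le_power2)

lemma pN_in: "pN b N w \<in> span (b ` {..<N})"
  unfolding pN_def by (intro span_sum span_scale span_base) auto

lemma orth_pN: assumes "s \<in> span (b ` {..<N})" shows "inner (w - pN b N w) s = 0"
proof -
  have "orthogonal (w - pN b N w) s"
    using assms
  proof (rule orthogonal_to_span)
    fix y assume "y \<in> b ` {..<N}"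
    then obtain j where "j < N" "y = b j" by auto
    then show "orthogonal (w - pN b N w) y"
      by (simp add: orthogonal_def inner_diff_left inner_pN_b)
  qed
  then show ?thesis by (simp add: orthogonal_def)
qed

lemma pN_id: assumes "w \<in> span (b ` {..<N})" shows "pN b N w = w"
proof -
  have "w - pN b N w \<in> span (b ` {..<N})" using assms pN_in by (intro span_diff)
  then have "inner (w - pN b N w) (w - pN b N w) = 0" by (rule orth_pN)
  then show ?thesis by simp
qed

lemma span_range_finite: assumes "w \<in> span (range b)" shows "\<exists>N. w \<in> span (b ` {..<N})"
proof -
  from assms obtain t r where t: "finite t" "t \<subseteq> range b" "w = (\<Sum>a\<in>t. r a *\<^sub>R a)"
    unfolding span_explicit by blast
  then obtain C where C: "finite C" "t = b ` C" using finite_subset_image[of t b UNIV] by auto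
  define N where "N = Suc (Max (insert 0 C))"
  have "C \<subseteq> {..<N}" using C by (auto simp: N_def le_imp_less_Suc)
  then have "t \<subseteq> b ` {..<N}" using C by auto
  then have "w \<in> span (b ` {..<N})" unfolding t(3) by (intro span_sum span_scale) (auto intro: span_base)
  then show ?thesis by blast
qed

lemma span_mono_N: "N \<le> N' \<Longrightarrow> span (b ` {..<N}) \<subseteq> span (b ` {..<N'})"
  by (intro span_mono) auto

lemma best_approx: assumes "u \<in> span (b ` {..<N})"
  shows "norm (w - pN b N w) \<le> norm (w - u)"
proof -
  have "pN b N w - u \<in> span (b ` {..<N})" using assms pN_in by (intro span_diff)
  then have o: "inner (w - pN b N w) (pN b N w - u) = 0" by (rule orth_pN)
  have "w - u = (w - pN b N w) + (pN b N w - u)" by simp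
  then have "(norm (w - u))\<^sup>2 = (norm (w - pN b N w))\<^sup>2 + (norm (pN b N w - u))\<^sup>2"
    using o by (metis norm_add_Pythagorean orthogonal_def)
  then have "(norm (w - pN b N w))\<^sup>2 \<le> (norm (w - u))\<^sup>2" by simp
  then show ?thesis by (simp add: power2_le_iff_abs_le)
qed

lemma parseval: assumes cl: "closure (span (range b)) = UNIV"
  shows "(\<lambda>k. (inner w (b k))\<^sup>2) sums (norm w)\<^sup>2"
  unfolding sums_def
proof (rule LIMSEQ_I)
  fix r :: real assume r: "0 < r"
  have "w \<in> closure (span (range b))" using cl by simp
  then obtain u where u: "u \<in> span (range b)" "dist u w < sqrt r"
    using r unfolding closure_approachable by (meson real_sqrt_gt_0_iff)
  obtain N0 where N0: "u \<in> span (b ` {..<N0})" using span_range_finite[OF u(1)] by blast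
  show "\<exists>no. \<forall>n\<ge>no. norm ((\<Sum>k<n. (inner w (b k))\<^sup>2) - (norm w)\<^sup>2) < r"
  proof (intro exI allI impI)
    fix n assume "N0 \<le> n"
    then have "u \<in> span (b ` {..<n})" using N0 span_mono_N by blast
    then have "norm (w - pN b n w) \<le> norm (w - u)" by (rule best_approx)
    also have "\<dots> < sqrt r" using u(2) by (simp add: dist_norm norm_minus_commute)
    finally have "(norm (w - pN b n w))\<^sup>2 < (sqrt r)\<^sup>2"
      by (intro power_strict_mono) auto
    then have "(norm (w - pN b n w))\<^sup>2 < r" using r by simp
    then show "norm ((\<Sum>k<n. (inner w (b k))\<^sup>2) - (norm w)\<^sup>2) < r"
      using norm_diff_pN[where w=w and N=n] bessel[where w=w and N=n] by simp
  qed
qed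

end

definition hsL :: "(nat \<Rightarrow> 'h::real_normed_vector) \<Rightarrow> ('h \<Rightarrow> 'h) \<Rightarrow> nat \<Rightarrow> real" where
  "hsL b T N = L2_set (\<lambda>k. norm (T (b k))) {..<N}"

lemma hs_sup: "hs_norm b T = (SUP N. ennreal (hsL b T N))"
proof -
  define s where "s N = (\<Sum>k<N. (norm (T (b k)))\<^sup>2)" for N
  have hsL_s: "hsL b T N = sqrt (s N)" for N by (simp add: hsL_def L2_set_def s_def)
  have inc: "incseq (\<lambda>N. ennreal (hsL b T N))"
    unfolding hsL_s s_def
    by (intro monoI ennreal_leI real_sqrt_le_mono sum_mono2) auto
  show ?thesis
  proof (cases "summable (\<lambda>k. (norm (T (b k)))\<^sup>2)")
    case True
    then have "s \<longlonglongrightarrow> (\<Sum>k. (norm (T (b k)))\<^sup>2)" unfolding s_def by (rule summable_LIMSEQ)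
    then have "(\<lambda>N. ennreal (hsL b T N)) \<longlonglongrightarrow> ennreal (sqrt (\<Sum>k. (norm (T (b k)))\<^sup>2))"
      unfolding hsL_s by (intro tendsto_ennrealI tendsto_real_sqrt)
    moreover have "(\<lambda>N. ennreal (hsL b T N)) \<longlonglongrightarrow> (SUP N. ennreal (hsL b T N))"
      using inc by (rule LIMSEQ_SUP)
    ultimately show ?thesis using True unfolding hs_norm_def by (simp add: LIMSEQ_unique)
  next
    case False
    have top: "(SUP N. ennreal (hsL b T N)) = \<top>"
      unfolding SUP_eq_top_iff
    proof (intro allI impI)
      fix x :: ennreal assume "x < \<top>"
      then obtain c where c: "0 \<le> c" "x = ennreal c" by (cases x) auto
      have "\<exists>N. c\<^sup>2 < s N"
      proof (rule ccontr)
        assume "\<not> ?thesis"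
        then have "\<And>N. (\<Sum>k<N. (norm (T (b k)))\<^sup>2) \<le> c\<^sup>2" by (auto simp: s_def not_less)
        then have "summable (\<lambda>k. (norm (T (b k)))\<^sup>2)" by (intro summableI_nonneg_bounded) auto
        then show False using False by simp
      qed
      then obtain N where N: "c\<^sup>2 < s N" by blast
      then have "c < sqrt (s N)" using c(1) by (simp add: real_less_rsqrt)
      then have "x < ennreal (hsL b T N)" using c by (simp add: hsL_s ennreal_less_iff)
      then show "\<exists>i\<in>UNIV. x < ennreal (hsL b T i)" by blast
    qed
    have hs: "hs_norm b T = \<top>" using False unfolding hs_norm_def by simp
    show ?thesis using hs top by (simp only:)
  qed
qed

lemma hsL_nonneg: "0 \<le> hsL b T N" by (simp add: hsL_def L2_set_nonneg)

lemma hsL_le_hs: "ennreal (hsL b T N) \<le> hs_norm b T"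
  unfolding hs_sup by (rule SUP_upper) auto

lemma hs_mono_scale:
  assumes "\<And>k. norm (F (b k)) \<le> c * norm (G (b k))" "0 \<le> c"
  shows "hs_norm b F \<le> ennreal c * hs_norm b G"
  unfolding hs_sup[of b F]
proof (rule SUP_least)
  fix N
  have "hsL b F N \<le> L2_set (\<lambda>k. c * norm (G (b k))) {..<N}"
    unfolding hsL_def by (rule L2_set_mono) (use assms in auto)
  also have "\<dots> = c * hsL b G N" unfolding hsL_def by (rule L2_set_right_distrib[symmetric]) fact
  finally have "ennreal (hsL b F N) \<le> ennreal (c * hsL b G N)" by (rule ennreal_leI)
  also have "\<dots> = ennreal c * ennreal (hsL b G N)" using assms(2) by (rule ennreal_mult')
  also have "\<dots> \<le> ennreal c * hs_norm b G" by (intro mult_left_mono hsL_le_hs) auto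
  finally show "ennreal (hsL b F N) \<le> ennreal c * hs_norm b G" .
qed

lemma hs_mono:
  assumes "\<And>k. norm (F (b k)) \<le> norm (G (b k))"
  shows "hs_norm b F \<le> hs_norm b G"
  using hs_mono_scale[of F b 1 G] assms by simp

lemma hs_triangle_gen:
  assumes "\<And>k. norm (H (b k)) \<le> norm (F (b k)) + norm (G (b k))"
  shows "hs_norm b H \<le> hs_norm b F + hs_norm b G"
  unfolding hs_sup[of b H]
proof (rule SUP_least)
  fix N
  have "hsL b H N \<le> L2_set (\<lambda>k. norm (F (b k)) + norm (G (b k))) {..<N}"
    unfolding hsL_def by (rule L2_set_mono) (use assms in auto)
  also have "\<dots> \<le> hsL b F N + hsL b G N" unfolding hsL_def by (rule L2_set_triangle_ineq)
  finally have "ennreal (hsL b H N) \<le> ennreal (hsL b F N + hsL b G N)" by (rule ennreal_leI)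
  also have "\<dots> = ennreal (hsL b F N) + ennreal (hsL b G N)" by (intro ennreal_plus hsL_nonneg)
  also have "\<dots> \<le> hs_norm b F + hs_norm b G" by (intro add_mono hsL_le_hs)
  finally show "ennreal (hsL b H N) \<le> hs_norm b F + hs_norm b G" .
qed

lemma hs_add: "hs_norm b (\<lambda>u. F u + G u) \<le> hs_norm b F + hs_norm b G"
  by (rule hs_triangle_gen) (rule norm_triangle_ineq)

lemma hs_diff: "hs_norm b (\<lambda>u. F u - G u) \<le> hs_norm b F + hs_norm b G"
  by (rule hs_triangle_gen) (rule norm_triangle_ineq4)

lemma hs_zero: "hs_norm b (\<lambda>u. 0) = 0"
  unfolding hs_norm_def by simp

lemma hs_sum: "finite A \<Longrightarrow> hs_norm b (\<lambda>u. \<Sum>j\<in>A. F j u) \<le> (\<Sum>j\<in>A. hs_norm b (F j))"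
proof (induction A rule: finite_induct)
  case empty then show ?case by (simp add: hs_zero)
next
  case (insert x A)
  have "hs_norm b (\<lambda>u. \<Sum>j\<in>insert x A. F j u) = hs_norm b (\<lambda>u. F x u + (\<Sum>j\<in>A. F j u))"
    using insert by simp
  also have "\<dots> \<le> hs_norm b (F x) + hs_norm b (\<lambda>u. \<Sum>j\<in>A. F j u)" by (rule hs_add)
  also have "\<dots> \<le> hs_norm b (F x) + (\<Sum>j\<in>A. hs_norm b (F j))" using insert by (intro add_left_mono)
  finally show ?case using insert by simp
qed

lemma hs_scale: "hs_norm b (\<lambda>u. c *\<^sub>R F u) \<le> ennreal \<bar>c\<bar> * hs_norm b F"
  by (rule hs_mono_scale) auto

context onb begin

lemma hs_tens: "hs_norm b (tens r r) \<le> ennreal ((norm r)\<^sup>2)"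
  unfolding hs_sup
proof (rule SUP_least)
  fix N
  have "(\<Sum>k<N. (norm (tens r r (b k)))\<^sup>2) = (norm r)\<^sup>2 * (\<Sum>k<N. (inner r (b k))\<^sup>2)"
    by (simp add: tens_def sum_distrib_left power_mult_distrib mult.commute)
  also have "\<dots> \<le> (norm r)\<^sup>2 * (norm r)\<^sup>2" by (intro mult_left_mono bessel) auto
  finally have S: "(\<Sum>k<N. (norm (tens r r (b k)))\<^sup>2) \<le> (norm r)\<^sup>2 * (norm r)\<^sup>2" .
  have "hsL b (tens r r) N \<le> sqrt (((norm r)\<^sup>2)\<^sup>2)"
    unfolding hsL_def L2_set_def using S by (intro real_sqrt_le_mono) (simp add: power2_eq_square)
  also have "\<dots> = (norm r)\<^sup>2" by (simp only: real_sqrt_abs) simp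
  finally show "ennreal (hsL b (tens r r) N) \<le> ennreal ((norm r)\<^sup>2)" by (simp add: ennreal_leI)
qed

lemma op_bound:
  assumes cl: "closure (span (range b)) = UNIV" and A: "bounded_linear A"
    and hs: "hs_norm b A \<le> ennreal h" and h: "0 \<le> h"
  shows "norm (A w) \<le> h * norm w"
proof -
  interpret A: bounded_linear A by fact
  have hN: "hsL b A N \<le> h" for N using order_trans[OF hsL_le_hs[of b A N] hs] h by (simp add: ennreal_le_iff)
  have sp: "norm (A w) \<le> h * norm w" if w: "w \<in> span (range b)" for w
  proof -
    obtain N where N: "w \<in> span (b ` {..<N})" using span_range_finite[OF w] by blast
    have "A w = A (\<Sum>k<N. inner w (b k) *\<^sub>R b k)" using pN_id[OF N] by (simp add: pN_def)
    also have "\<dots> = (\<Sum>k<N. inner w (b k) *\<^sub>R A (b k))" by (simp add: A.sum A.scaleR)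
    finally have "norm (A w) \<le> (\<Sum>k<N. \<bar>inner w (b k)\<bar> * \<bar>norm (A (b k))\<bar>)"
      by (metis (no_types, lifting) abs_norm_cancel norm_scaleR norm_sum sum.cong)
    also have "\<dots> \<le> L2_set (\<lambda>k. inner w (b k)) {..<N} * hsL b A N"
      unfolding hsL_def by (rule L2_set_mult_ineq)
    also have "\<dots> \<le> norm w * h"
    proof (intro mult_mono hN)
      have "(\<Sum>k<N. (inner w (b k))\<^sup>2) \<le> (norm w)\<^sup>2" by (rule bessel)
      then show "L2_set (\<lambda>k. inner w (b k)) {..<N} \<le> norm w"
        unfolding L2_set_def by (simp add: real_sqrt_le_iff[symmetric, of _ "(norm w)\<^sup>2"] del: real_sqrt_le_iff)
    qed (auto simp: hsL_nonneg)
    finally show ?thesis by (simp add: mult.commute)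
  qed
  have "closed {w. norm (A w) \<le> h * norm w}"
    by (intro closed_Collect_le continuous_intros A.continuous_on)
  then have "closure (span (range b)) \<subseteq> {w. norm (A w) \<le> h * norm w}"
    using sp by (intro closure_minimal) auto
  then show ?thesis using cl by auto
qed

end

definition isproj :: "('h::real_inner \<Rightarrow> 'h) \<Rightarrow> 'h set \<Rightarrow> bool" where
  "isproj P V \<longleftrightarrow> subspace V \<and> (\<forall>x. P x \<in> V \<and> (\<forall>s\<in>V. inner (x - P x) s = 0))"

lemma isproj_in: "isproj P V \<Longrightarrow> P x \<in> V" by (simp add: isproj_def)
lemma isproj_orth: "isproj P V \<Longrightarrow> s \<in> V \<Longrightarrow> inner (x - P x) s = 0" by (simp add: isproj_def)
lemma isproj_sub: "isproj P V \<Longrightarrow> subspace V" by (simp add: isproj_def)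

lemma isproj_unique:
  assumes P: "isproj P V" and y: "y \<in> V" "\<forall>s\<in>V. inner (x - y) s = 0"
  shows "P x = y"
proof -
  have d: "P x - y \<in> V" using P y by (meson isproj_in isproj_sub subspace_diff)
  have "inner (P x - y) (P x - y) = inner (x - y) (P x - y) - inner (x - P x) (P x - y)"
    by (simp add: inner_diff_left)
  also have "\<dots> = 0" using y(2) d isproj_orth[OF P d] by simp
  finally show ?thesis by simp
qed

lemma isproj_id: "isproj P V \<Longrightarrow> s \<in> V \<Longrightarrow> P s = s"
  by (rule isproj_unique) auto

lemma isproj_idem: "isproj P V \<Longrightarrow> P (P x) = P x"
  by (simp add: isproj_id isproj_in)

lemma isproj_linear: assumes P: "isproj P V" shows "linear P"
proof (rule linearI)
  have V: "subspace V" using P by (rule isproj_sub)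
  fix x y :: 'a
  show "P (x + y) = P x + P y"
  proof (rule isproj_unique[OF P])
    show "P x + P y \<in> V" using V by (intro subspace_add isproj_in[OF P])
    show "\<forall>s\<in>V. inner (x + y - (P x + P y)) s = 0"
    proof
      fix s assume s: "s \<in> V"
      have "inner (x + y - (P x + P y)) s = inner (x - P x) s + inner (y - P y) s"
        by (simp add: inner_diff_left inner_add_left)
      then show "inner (x + y - (P x + P y)) s = 0" using isproj_orth[OF P s] by simp
    qed
  qed
next
  have V: "subspace V" using P by (rule isproj_sub)
  fix r :: real and x :: 'a
  show "P (r *\<^sub>R x) = r *\<^sub>R P x"
  proof (rule isproj_unique[OF P])
    show "r *\<^sub>R P x \<in> V" using V by (intro subspace_scale isproj_in[OF P])
    show "\<forall>s\<in>V. inner (r *\<^sub>R x - r *\<^sub>R P x) s = 0"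
    proof
      fix s assume s: "s \<in> V"
      have "inner (r *\<^sub>R x - r *\<^sub>R P x) s = r * inner (x - P x) s"
        by (simp add: inner_diff_left algebra_simps)
      then show "inner (r *\<^sub>R x - r *\<^sub>R P x) s = 0" using isproj_orth[OF P s] by simp
    qed
  qed
qed

lemma isproj_sym_aux: assumes P: "isproj P V" shows "inner (P x) y = inner (P x) (P y)"
proof -
  have "inner (P x) y = inner (P x) (P y + (y - P y))" by simp
  also have "\<dots> = inner (P x) (P y) + inner (P x) (y - P y)" by (rule inner_add_right)
  also have "inner (P x) (y - P y) = inner (y - P y) (P x)" by (rule inner_commute)
  also have "\<dots> = 0" using isproj_orth[OF P isproj_in[OF P]] by simp
  finally show ?thesis by simp
qed

lemma isproj_sym: assumes P: "isproj P V" shows "inner (P x) y = inner x (P y)"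
  using isproj_sym_aux[OF P, of x y] isproj_sym_aux[OF P, of y x] by (metis inner_commute)

lemma isproj_norm: assumes P: "isproj P V" shows "norm (P x) \<le> norm x"
proof -
  have "x = P x + (x - P x)" by simp
  moreover have "inner (P x) (x - P x) = 0" using isproj_orth[OF P isproj_in[OF P]] by (simp add: inner_commute)
  ultimately have "(norm x)\<^sup>2 = (norm (P x))\<^sup>2 + (norm (x - P x))\<^sup>2"
    by (metis norm_add_Pythagorean orthogonal_def)
  then have "(norm (P x))\<^sup>2 \<le> (norm x)\<^sup>2" by simp
  then show ?thesis by (simp add: power2_le_iff_abs_le)
qed

lemma isproj_norm_sq: assumes P: "isproj P V" shows "(norm (P x))\<^sup>2 \<le> (norm x)\<^sup>2"
  using isproj_norm[OF P, of x] by (simp add: power_mono)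

lemma isproj_bl: assumes P: "isproj P V" shows "bounded_linear P"
proof -
  interpret linear P by (rule isproj_linear[OF P])
  show ?thesis by unfold_locales (use isproj_norm[OF P] in \<open>auto intro!: exI[of _ 1]\<close>)
qed

lemma isproj_zero: assumes P: "isproj P V" "\<forall>s\<in>V. inner k s = 0" shows "P k = 0"
  using P by (intro isproj_unique) (auto intro: subspace_0 isproj_sub)

lemma orth_proj_dim_isproj:
  assumes "orth_proj_dim P d"
  obtains B where "finite B" "independent B" "card B = d" "isproj P (span B)"
proof -
  from assms obtain B where B: "finite B" "independent B" "card B = d"
    "\<forall>x. P x \<in> span B \<and> (\<forall>s\<in>span B. inner (x - P x) s = 0)"
    unfolding orth_proj_dim_def by blast
  have "isproj P (span B)" unfolding isproj_def using B(4) subspace_span by blast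
  with B(1-3) show ?thesis by (rule that)
qed

lemma proj_first_pN: "proj_first b D = pN b D"
  unfolding proj_first_def pN_def by (intro ext sum.cong refl) (metis inner_commute)

lemma (in onb) proj_first_isproj: "isproj (proj_first b D) (span (b ` {..<D}))"
  unfolding isproj_def proj_first_pN using pN_in orth_pN by auto



definition symop :: "('h::real_inner \<Rightarrow> 'h) \<Rightarrow> bool" where
  "symop A \<longleftrightarrow> bounded_linear A \<and> (\<forall>x y. inner (A x) y = inner x (A y))"

lemma gamma_hat_bl: "bounded_linear (gamma_hat n xs)" unfolding gamma_hat_def tens_def
  by (intro bounded_linear_intros)

lemma gamma_hat_inner: "inner (gamma_hat n xs u) v = (1 / real n) * (\<Sum>i<n. inner (xs i) u * inner (xs i) v)"
  by (simp add: gamma_hat_def tens_def inner_sum_left)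

lemma gamma_hat_sym: "symop (gamma_hat n xs)"
  unfolding symop_def using gamma_hat_bl
  by (auto simp: gamma_hat_inner inner_commute[of _ "gamma_hat n xs _"] mult.commute)

lemma gamma_hat_psd: "0 \<le> inner (gamma_hat n xs u) u"
  by (auto simp: gamma_hat_inner intro!: divide_nonneg_nonneg sum_nonneg)

lemma sandwich_bl: "isproj P V \<Longrightarrow> bounded_linear A \<Longrightarrow> bounded_linear (P \<circ> A \<circ> P)"
  unfolding o_def
  by (rule bounded_linear_compose[OF isproj_bl], assumption, rule bounded_linear_compose[OF _ isproj_bl]; assumption)

lemma sandwich_inner: assumes P: "isproj P V" and A: "symop A"
  shows "inner ((P \<circ> A \<circ> P) x) y = inner (A (P x)) (P y)"
  using isproj_sym[OF P] by simp

lemma sandwich_sym: assumes P: "isproj P V" and A: "symop A" shows "symop (P \<circ> A \<circ> P)"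
  using A unfolding symop_def
  by (auto simp: sandwich_bl[OF P] isproj_sym[OF P])


lemma quad_zero:
  fixes a \<beta> :: real
  assumes H: "\<And>s. 0 \<le> 2 * s * a + s\<^sup>2 * \<beta>"
  shows "a = 0"
proof (rule ccontr)
  assume a: "a \<noteq> 0"
  define c where "c = \<bar>\<beta>\<bar> + 1"
  have c: "0 < c" by (simp add: c_def)
  have "0 \<le> 2 * (- a / c) * a + (- a / c)\<^sup>2 * \<beta>" by (rule H)
  also have "2 * (- a / c) * a + (- a / c)\<^sup>2 * \<beta> = a\<^sup>2 * (\<beta> - 2 * c) / c\<^sup>2"
    using c by (simp add: field_simps power2_eq_square)
  finally have "0 \<le> a\<^sup>2 * (\<beta> - 2 * c)" using c by (simp add: zero_le_divide_iff)
  moreover have "\<beta> - 2 * c < 0" unfolding c_def by (cases "\<beta> \<ge> 0") auto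
  moreover have "0 < a\<^sup>2" using a by simp
  ultimately show False by (simp add: mult_pos_neg zero_le_mult_iff)
qed

primrec Kset :: "(nat \<Rightarrow> 'h::real_normed_vector) \<Rightarrow> nat \<Rightarrow> 'h set" where
  "Kset b 0 = {0}"
| "Kset b (Suc N) = {x + y | x y. x \<in> Kset b N \<and> y \<in> (\<lambda>c. c *\<^sub>R b N) ` {-1..1}}"

lemma Kset_compact: "compact (Kset b N)"
proof (induction N)
  case 0 then show ?case by simp
next
  case (Suc N)
  have "compact ((\<lambda>c. c *\<^sub>R b N) ` {-1..1::real})"
    by (intro compact_continuous_image continuous_intros) auto
  with Suc show ?case by (simp add: compact_sums)
qed

lemma Kset_span: "Kset b N \<subseteq> span (b ` {..<N})"
proof (induction N)
  case 0 then show ?case by (simp add: span_zero)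
next
  case (Suc N)
  have s: "span (b ` {..<N}) \<subseteq> span (b ` {..<Suc N})" by (intro span_mono) auto
  have "b N \<in> span (b ` {..<Suc N})" by (intro span_base) auto
  then show ?case using Suc s by (auto intro!: span_add span_scale)
qed

context onb begin

lemma norm_b: "norm (b k) = 1"
  using ON by (simp add: norm_eq_sqrt_inner)

lemma pN_Kset: "norm w \<le> 1 \<Longrightarrow> pN b N w \<in> Kset b N"
proof (induction N)
  case 0 then show ?case by (simp add: pN_def)
next
  case (Suc N)
  have "\<bar>inner w (b N)\<bar> \<le> norm w * norm (b N)" by (rule Cauchy_Schwarz_ineq2)
  then have "inner w (b N) \<in> {-1..1}" using Suc.prems norm_b by auto
  moreover have "pN b (Suc N) w = pN b N w + inner w (b N) *\<^sub>R b N" by (simp add: pN_def)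
  moreover have "inner w (b N) *\<^sub>R b N \<in> (\<lambda>c. c *\<^sub>R b N) ` {-1..1}"
    using calculation(1) by (rule rev_image_eqI) simp
  ultimately show ?case using Suc by auto
qed

lemma gamma_D_eig:
  assumes G: "symop \<Gamma>" and pos: "\<forall>x. x \<noteq> 0 \<longrightarrow> 0 < inner (\<Gamma> x) x" and D: "1 \<le> D"
  shows "0 < min_pos_eig (gamma_D b D \<Gamma>)"
    "\<And>x. x \<in> span (b ` {..<D}) \<Longrightarrow> min_pos_eig (gamma_D b D \<Gamma>) * (norm x)\<^sup>2 \<le> inner (\<Gamma> x) x"
proof -
  define V where "V = span (b ` {..<D})"
  define Pj where "Pj = proj_first b D"
  have Pi: "isproj Pj V" unfolding V_def Pj_def by (rule proj_first_isproj)
  interpret Gl: bounded_linear \<Gamma> using G by (simp add: symop_def)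
  have sym: "inner (\<Gamma> x) y = inner x (\<Gamma> y)" for x y using G by (simp add: symop_def)
  define U where "U = Kset b D \<inter> {x. norm x = 1}"
  have Ucomp: "compact U" unfolding U_def by (intro compact_Int_closed Kset_compact closed_Collect_eq continuous_intros)
  have b0: "b 0 \<in> V" unfolding V_def using D by (intro span_base) auto
  have "b 0 \<in> U" unfolding U_def using pN_Kset[of "b 0" D] pN_id[OF b0[unfolded V_def]] norm_b by simp
  then have Une: "U \<noteq> {}" by auto
  have cont: "continuous_on U (\<lambda>x. inner (\<Gamma> x) x)"
    by (intro continuous_on_inner continuous_on_id continuous_on_subset[OF Gl.continuous_on[OF continuous_on_id]]) auto
  obtain w where w: "w \<in> U" and wmin: "\<And>y. y \<in> U \<Longrightarrow> inner (\<Gamma> w) w \<le> inner (\<Gamma> y) y"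
    using continuous_attains_inf[OF Ucomp Une cont] by blast
  define l where "l = inner (\<Gamma> w) w"
  have wV: "w \<in> V" using w Kset_span unfolding U_def V_def by auto
  have nw: "norm w = 1" using w unfolding U_def by simp
  have low: "l * (norm x)\<^sup>2 \<le> inner (\<Gamma> x) x" if x: "x \<in> V" for x
  proof (cases "x = 0")
    case True then show ?thesis by simp
  next
    case False
    define u where "u = (1 / norm x) *\<^sub>R x"
    have uV: "u \<in> V" unfolding u_def V_def using x[unfolded V_def] by (rule span_scale)
    have nu: "norm u = 1" using False by (simp add: u_def)
    have "u \<in> U" unfolding U_def using pN_Kset[of u D] pN_id[OF uV[unfolded V_def]] nu by simp
    then have "l \<le> inner (\<Gamma> u) u" unfolding l_def by (rule wmin)
    also have "inner (\<Gamma> u) u = inner (\<Gamma> x) x / (norm x)\<^sup>2"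
      by (simp add: u_def Gl.scaleR power2_eq_square)
    finally show ?thesis using False by (simp add: field_simps)
  qed
  have lpos: "0 < l" using pos nw unfolding l_def by (metis norm_zero zero_neq_one)
  define y where "y = Pj (\<Gamma> w) - l *\<^sub>R w"
  have yV: "y \<in> V" unfolding y_def using Pi wV isproj_sub[OF Pi]
    by (intro subspace_diff subspace_scale isproj_in[OF Pi]) auto
  have yy: "inner y y = inner (\<Gamma> w) y - l * inner w y"
  proof -
    have "inner y y = inner (Pj (\<Gamma> w)) y - l * inner w y" by (simp add: y_def inner_diff_left)
    also have "inner (Pj (\<Gamma> w)) y = inner (\<Gamma> w) (Pj y)" by (rule isproj_sym[OF Pi])
    also have "Pj y = y" using isproj_id[OF Pi yV] .
    finally show ?thesis .
  qed
  have "\<And>s. 0 \<le> 2 * s * inner y y + s\<^sup>2 * (inner (\<Gamma> y) y - l * inner y y)"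
  proof -
    fix s :: real
    have "w + s *\<^sub>R y \<in> V" using wV yV isproj_sub[OF Pi] by (intro subspace_add subspace_scale) auto
    then have L: "l * (norm (w + s *\<^sub>R y))\<^sup>2 \<le> inner (\<Gamma> (w + s *\<^sub>R y)) (w + s *\<^sub>R y)" by (rule low)
    have ww: "inner w w = 1" using nw by (simp add: norm_eq_sqrt_inner)
    have "(norm (w + s *\<^sub>R y))\<^sup>2 = inner (w + s *\<^sub>R y) (w + s *\<^sub>R y)" by (rule power2_norm_eq_inner)
    also have "\<dots> = inner w w + 2 * s * inner w y + s\<^sup>2 * inner y y"
      by (simp add: inner_add_left inner_add_right inner_commute[of y w] power2_eq_square algebra_simps)
    finally have e1: "(norm (w + s *\<^sub>R y))\<^sup>2 = 1 + 2 * s * inner w y + s\<^sup>2 * inner y y" using ww by simp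
    have e2: "inner (\<Gamma> (w + s *\<^sub>R y)) (w + s *\<^sub>R y) = l + 2 * s * inner (\<Gamma> w) y + s\<^sup>2 * inner (\<Gamma> y) y"
      using sym[of y w] inner_commute[of y "\<Gamma> w"] by (simp add: l_def Gl.add Gl.scaleR inner_add_left inner_add_right power2_eq_square algebra_simps)
    show "0 \<le> 2 * s * inner y y + s\<^sup>2 * (inner (\<Gamma> y) y - l * inner y y)"
      using L unfolding e1 e2 yy by (simp add: algebra_simps)
  qed
  then have "inner y y = 0" by (rule quad_zero)
  then have eig: "Pj (\<Gamma> w) = l *\<^sub>R w" unfolding y_def by simp
  have GwD: "gamma_D b D \<Gamma> x = Pj (\<Gamma> (Pj x))" for x by (simp add: gamma_D_def Pj_def)
  have lE: "l \<in> {c. 0 < c \<and> (\<exists>x. x \<noteq> 0 \<and> gamma_D b D \<Gamma> x = c *\<^sub>R x)}"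
    using lpos eig nw isproj_id[OF Pi wV] by (auto simp: GwD intro!: exI[of _ w])
  have lmin: "l \<le> c" if c: "c \<in> {c. 0 < c \<and> (\<exists>x. x \<noteq> 0 \<and> gamma_D b D \<Gamma> x = c *\<^sub>R x)}" for c
  proof -
    from c obtain x where cp: "0 < c" and x: "x \<noteq> 0" "Pj (\<Gamma> (Pj x)) = c *\<^sub>R x" by (auto simp: GwD)
    have "x = (1 / c) *\<^sub>R Pj (\<Gamma> (Pj x))" using x cp by simp
    then have xV: "x \<in> V" using isproj_in[OF Pi] isproj_sub[OF Pi] by (metis subspace_scale)
    have "c * (norm x)\<^sup>2 = inner (Pj (\<Gamma> (Pj x))) x" using x by (simp add: power2_norm_eq_inner)
    also have "\<dots> = inner (\<Gamma> x) x" using isproj_sym[OF Pi] isproj_id[OF Pi xV] by metis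
    finally have "l * (norm x)\<^sup>2 \<le> c * (norm x)\<^sup>2" using low[OF xV] by simp
    then show ?thesis using x by simp
  qed
  have mpe: "min_pos_eig (gamma_D b D \<Gamma>) = l"
    unfolding min_pos_eig_def by (rule cInf_eq_minimum[OF lE lmin])
  show "0 < min_pos_eig (gamma_D b D \<Gamma>)" using mpe lpos by simp
  show "\<And>x. x \<in> span (b ` {..<D}) \<Longrightarrow> min_pos_eig (gamma_D b D \<Gamma>) * (norm x)\<^sup>2 \<le> inner (\<Gamma> x) x"
    using low mpe unfolding V_def by simp
qed

end

lemma subspace_orth: "subspace {w. inner w v = 0}"
  unfolding subspace_def by (auto simp: inner_add_left)

context onb begin

lemma Bd_indep: "independent (b ` {..<D})"
proof (rule pairwise_orthogonal_independent)
  show "pairwise orthogonal (b ` {..<D})"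
    unfolding pairwise_def orthogonal_def using ON by auto
  show "0 \<notin> b ` {..<D}" using norm_b by (auto simp del: norm_zero) (metis norm_zero zero_neq_one)
qed

lemma b_inj: "inj b"
  using ON by (intro injI) (metis zero_neq_one)

lemma Bd_card: "card (b ` {..<D}) = D"
  using b_inj by (simp add: card_image inj_on_subset)

lemma pinv_good:
  fixes P A \<Gamma> :: "'h \<Rightarrow> 'h" and B :: "'h set"
  assumes P: "isproj P (span B)" and B: "finite B" "independent B" "card B = D"
    and A: "symop A" "\<forall>u. 0 \<le> inner (A u) u"
    and G: "symop \<Gamma>" "\<forall>x. x \<noteq> 0 \<longrightarrow> 0 < inner (\<Gamma> x) x" and D: "1 \<le> D"
    and close: "\<forall>x. norm ((P \<circ> A \<circ> P) x - gamma_D b D \<Gamma> x) \<le> (min_pos_eig (gamma_D b D \<Gamma>) / 2) * norm x"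
  shows "linear (pseudo_inv (P \<circ> A \<circ> P))"
    "\<forall>x. norm (pseudo_inv (P \<circ> A \<circ> P) x) \<le> (2 / min_pos_eig (gamma_D b D \<Gamma>)) * norm x"
proof -
  define t where "t = min_pos_eig (gamma_D b D \<Gamma>)"
  define T where "T = P \<circ> A \<circ> P"
  define S where "S = span B"
  define V where "V = span (b ` {..<D})"
  define Bd where "Bd = b ` {..<D}"
  define Pj where "Pj = proj_first b D"
  have Pj: "isproj Pj V" unfolding Pj_def V_def by (rule proj_first_isproj)
  have tpos: "0 < t" unfolding t_def by (rule gamma_D_eig(1)[OF G D])
  have tlow: "t * (norm x)\<^sup>2 \<le> inner (\<Gamma> x) x" if "x \<in> V" for x
    unfolding t_def using gamma_D_eig(2)[OF G D] that V_def by blast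
  have PS: "isproj P S" using P S_def by simp
  have Ssub: "subspace S" unfolding S_def by (rule subspace_span)
  have Vsub: "subspace V" unfolding V_def by (rule subspace_span)
  interpret Pl: linear P by (rule isproj_linear[OF PS])
  interpret Al: bounded_linear A using A(1) by (simp add: symop_def)
  have Tbl: "bounded_linear T" unfolding T_def by (rule sandwich_bl[OF PS Al.bounded_linear_axioms])
  have Tl: "linear T" by (rule bounded_linear.linear[OF Tbl])
  interpret Tl: linear T by (rule Tl)
  have Tinner: "inner (T x) y = inner (A (P x)) (P y)" for x y
    unfolding T_def by (rule sandwich_inner[OF PS A(1)])
  have TS: "T x \<in> S" for x unfolding T_def by (simp add: isproj_in[OF PS])
  have TP: "T (P y) = T y" for y unfolding T_def by (simp add: isproj_idem[OF PS])
  have Ginner: "inner (gamma_D b D \<Gamma> x) x = inner (\<Gamma> x) x" if "x \<in> V" for x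
    using that sandwich_inner[OF Pj G(1), of x x] isproj_id[OF Pj that]
    by (simp add: gamma_D_def Pj_def)
  have qdiff: "inner (gamma_D b D \<Gamma> x) x - (t / 2) * (norm x)\<^sup>2 \<le> inner (T x) x" for x
  proof -
    have "\<bar>inner (T x - gamma_D b D \<Gamma> x) x\<bar> \<le> norm (T x - gamma_D b D \<Gamma> x) * norm x"
      by (rule Cauchy_Schwarz_ineq2)
    also have "\<dots> \<le> (t / 2) * norm x * norm x"
      using close unfolding T_def t_def by (intro mult_right_mono) auto
    finally have "\<bar>inner (T x) x - inner (gamma_D b D \<Gamma> x) x\<bar> \<le> (t / 2) * (norm x)\<^sup>2"
      by (simp add: inner_diff_left power2_eq_square)
    then show ?thesis by linarith
  qed
  have coer: "(t / 2) * (norm v)\<^sup>2 \<le> inner (T v) v" if vS: "v \<in> S" for v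
  proof (cases "v = 0")
    case True then show ?thesis by (simp add: Tl.zero)
  next
    case False
    then have vv: "0 < inner v v" by simp
    define L where "L x = P x - (inner (P x) v / inner v v) *\<^sub>R v" for x
    have Ll: "linear L"
      by (rule linearI) (simp_all add: L_def Pl.add Pl.scaleR inner_add_left algebra_simps add_divide_distrib scaleR_add_left)
    have LS: "L x \<in> S" for x unfolding L_def using Ssub vS
      by (intro subspace_diff subspace_scale isproj_in[OF PS]) auto
    have Lo: "inner (L x) v = 0" for x unfolding L_def using vv by (simp add: inner_diff_left)
    have "\<exists>x\<in>V. x \<noteq> 0 \<and> L x = 0"
    proof (rule ccontr)
      assume "\<not> ?thesis"
      then have inj: "inj_on L V" using linear_inj_on_iff_eq_0[OF Ll Vsub] by blast
      have spBd: "span Bd = V" unfolding Bd_def V_def ..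
      have indL: "independent (L ` Bd)"
        using linear_independent_injective_image[OF Ll] Bd_indep inj spBd unfolding Bd_def by metis
      have cardL: "card (L ` Bd) = D"
        using card_image[OF inj_on_subset[OF inj]] Bd_card span_superset[of Bd] spBd unfolding Bd_def by metis
      have "span (L ` Bd) \<subseteq> {w. inner w v = 0}"
        using Lo by (intro span_minimal subspace_orth) auto
      then have vn: "v \<notin> span (L ` Bd)" using vv by auto
      have ind2: "independent (insert v (L ` Bd))" by (rule independent_insertI[OF vn indL])
      have fin: "finite (L ` Bd)" unfolding Bd_def by simp
      have vnot: "v \<notin> L ` Bd" using span_base[of v "L ` Bd"] vn by blast
      have "insert v (L ` Bd) \<subseteq> span B"
        using LS vS unfolding S_def by (simp add: image_subset_iff)
      then have "card (insert v (L ` Bd)) \<le> card B"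
        by (rule conjunct2[OF independent_span_bound[OF B(1) ind2]])
      then show False using cardL fin vnot B(3) by simp
    qed
    then obtain x where xV: "x \<in> V" and x0: "x \<noteq> 0" and Lx: "L x = 0" by blast
    define a where "a = inner (P x) v / inner v v"
    have Px: "P x = a *\<^sub>R v" using Lx unfolding L_def a_def by simp
    have Pv: "P v = v" using isproj_id[OF PS vS] .
    have "(norm (P x))\<^sup>2 \<le> (norm x)\<^sup>2" by (rule isproj_norm_sq[OF PS])
    then have nx: "a\<^sup>2 * (norm v)\<^sup>2 \<le> (norm x)\<^sup>2" by (simp add: Px power_mult_distrib)
    have Tx: "inner (T x) x = a\<^sup>2 * inner (A v) v"
      by (simp add: Tinner Px Al.scaleR power2_eq_square)
    have Tv: "inner (T v) v = inner (A v) v" by (simp add: Tinner Pv)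
    have "t * (norm x)\<^sup>2 - (t / 2) * (norm x)\<^sup>2 \<le> inner (T x) x"
      using qdiff[of x] tlow[OF xV] Ginner[OF xV] by simp
    then have low: "(t / 2) * (norm x)\<^sup>2 \<le> a\<^sup>2 * inner (A v) v" using Tx by simp
    have nxpos: "0 < (norm x)\<^sup>2" using x0 by simp
    have "0 < (t / 2) * (norm x)\<^sup>2" using tpos nxpos by simp
    then have "0 < a\<^sup>2 * inner (A v) v" using low by linarith
    then have "a \<noteq> 0" by auto
    then have apos: "0 < a\<^sup>2" by simp
    have "(t / 2) * (a\<^sup>2 * (norm v)\<^sup>2) \<le> (t / 2) * (norm x)\<^sup>2"
      using nx tpos by (intro mult_left_mono) auto
    then have "a\<^sup>2 * ((t / 2) * (norm v)\<^sup>2) \<le> (t / 2) * (norm x)\<^sup>2" by (simp add: mult_ac)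
    also have "\<dots> \<le> a\<^sup>2 * inner (A v) v" by (rule low)
    finally have "(t / 2) * (norm v)\<^sup>2 \<le> inner (A v) v" using apos by (simp add: mult_le_cancel_left_pos)
    then show ?thesis using Tv by simp
  qed
  have injT: "inj_on T S"
    unfolding linear_inj_on_iff_eq_0[OF Tl Ssub]
  proof (intro ballI impI)
    fix v assume "v \<in> S" "T v = 0"
    then have "(t / 2) * (norm v)\<^sup>2 \<le> 0" using coer[of v] by simp
    then show "v = 0" using tpos by (simp add: mult_le_0_iff)
  qed
  have surj: "S \<subseteq> T ` S"
  proof
    fix s assume sS: "s \<in> S"
    have indT: "independent (T ` B)"
      using linear_independent_injective_image[OF Tl B(2)] injT unfolding S_def by blast
    have cardT: "card (T ` B) = D"
      using card_image[OF inj_on_subset[OF injT]] span_superset[of B] B(3) unfolding S_def by metis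
    have "s \<in> span (T ` B)"
    proof (rule ccontr)
      assume sn: "s \<notin> span (T ` B)"
      have ind2: "independent (insert s (T ` B))" by (rule independent_insertI[OF sn indT])
      have "insert s (T ` B) \<subseteq> span B"
        using TS sS unfolding S_def by (simp add: image_subset_iff)
      then have "card (insert s (T ` B)) \<le> card B"
        by (rule conjunct2[OF independent_span_bound[OF B(1) ind2]])
      moreover have "s \<notin> T ` B" using span_base[of s "T ` B"] sn by blast
      ultimately show False using cardT B(1) B(3) by simp
    qed
    then show "s \<in> T ` S" unfolding S_def span_linear_image[OF Tl] .
  qed
  have rangeT: "range T = S"
  proof
    show "range T \<subseteq> S" using TS by auto
    show "S \<subseteq> range T" using surj by auto
  qed
  have uniq: "z1 = z2" if "z1 \<in> S" "z2 \<in> S" "\<forall>w\<in>S. inner (T z1 - x) w = 0" "\<forall>w\<in>S. inner (T z2 - x) w = 0" for z1 z2 x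
  proof -
    have dS: "z1 - z2 \<in> S" using that Ssub by (intro subspace_diff) auto
    have "inner (T (z1 - z2)) (z1 - z2) = inner (T z1 - x) (z1 - z2) - inner (T z2 - x) (z1 - z2)"
      by (simp add: Tl.diff inner_diff_left)
    also have "\<dots> = 0" using that dS by simp
    finally have "(t / 2) * (norm (z1 - z2))\<^sup>2 \<le> 0" using coer[OF dS] by simp
    then show ?thesis using tpos by (simp add: mult_le_0_iff)
  qed
  have ex1: "\<exists>!z. z \<in> range T \<and> (\<forall>w\<in>range T. inner (T z - x) w = 0)" for x
  proof -
    have "P x \<in> T ` S" using subsetD[OF surj isproj_in[OF PS]] .
    then obtain z where z: "z \<in> S" "P x = T z" by (rule imageE)
    have zo: "\<forall>w\<in>S. inner (T z - x) w = 0"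
    proof
      fix w assume w: "w \<in> S"
      have "inner (T z - x) w = - inner (x - P x) w" using z(2) by (simp add: inner_diff_left)
      then show "inner (T z - x) w = 0" using isproj_orth[OF PS w] by simp
    qed
    show ?thesis unfolding rangeT
    proof (rule ex1I[of _ z])
      show "z \<in> S \<and> (\<forall>w\<in>S. inner (T z - x) w = 0)" using z(1) zo by (rule conjI)
      fix z' assume "z' \<in> S \<and> (\<forall>w\<in>S. inner (T z' - x) w = 0)"
      then show "z' = z" using uniq[of z' z x] z(1) zo by (elim conjE) 
    qed
  qed
  define Q where "Q = pseudo_inv T"
  have Q: "Q x \<in> S \<and> (\<forall>w\<in>S. inner (T (Q x) - x) w = 0)" for x
    using theI'[OF ex1[of x]] unfolding Q_def pseudo_inv_def rangeT .
  have Qeq: "Q x = z" if "z \<in> S" "\<forall>w\<in>S. inner (T z - x) w = 0" for x z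
    using uniq[of "Q x" z x] Q[of x] that by (elim conjE) simp
  have bound: "norm (Q x) \<le> (2 / t) * norm x" for x
  proof (cases "Q x = 0")
    case True then show ?thesis using tpos by simp
  next
    case False
    have "(t / 2) * (norm (Q x))\<^sup>2 \<le> inner (T (Q x)) (Q x)" using coer Q by blast
    also have "inner (T (Q x)) (Q x) = inner x (Q x)"
      using Q[of x] by (simp add: inner_diff_left)
    also have "\<dots> \<le> norm x * norm (Q x)" by (rule Cauchy_Schwarz_ineq2[THEN order_trans[OF abs_ge_self]])
    finally have "(t / 2) * norm (Q x) \<le> norm x" using False by (simp add: power2_eq_square)
    then show ?thesis using tpos by (simp add: field_simps)
  qed
  have linQ: "linear Q"
  proof (rule linearI)
    fix x y
    show "Q (x + y) = Q x + Q y"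
    proof (rule Qeq)
      show "Q x + Q y \<in> S" using Q Ssub by (intro subspace_add) auto
      show "\<forall>w\<in>S. inner (T (Q x + Q y) - (x + y)) w = 0"
        using Q[of x] Q[of y] by (simp add: Tl.add inner_diff_left inner_add_left algebra_simps)
    qed
  next
    fix r x
    show "Q (r *\<^sub>R x) = r *\<^sub>R Q x"
    proof (rule Qeq)
      show "r *\<^sub>R Q x \<in> S" using Q Ssub by (intro subspace_scale) auto
      have "inner (T (r *\<^sub>R Q x) - r *\<^sub>R x) w = r * inner (T (Q x) - x) w" for w
        by (simp add: Tl.scaleR inner_diff_left algebra_simps)
      then show "\<forall>w\<in>S. inner (T (r *\<^sub>R Q x) - r *\<^sub>R x) w = 0" using Q[of x] by simp
    qed
  qed
  show "linear (pseudo_inv (P \<circ> A \<circ> P))" using linQ unfolding Q_def T_def .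
  show "\<forall>x. norm (pseudo_inv (P \<circ> A \<circ> P) x) \<le> (2 / min_pos_eig (gamma_D b D \<Gamma>)) * norm x"
    using bound unfolding Q_def T_def t_def by blast
qed

end

lemma ennreal_sq_sum_le: "(a + b :: ennreal)\<^sup>2 \<le> 2 * a\<^sup>2 + 2 * b\<^sup>2"
proof (cases a; cases b)
  fix x y :: real assume xy: "0 \<le> x" "a = ennreal x" "0 \<le> y" "b = ennreal y"
  have "0 \<le> (x - y)\<^sup>2" by simp
  then have "(x + y)\<^sup>2 \<le> 2 * x\<^sup>2 + 2 * y\<^sup>2" by (simp add: power2_eq_square algebra_simps)
  then have "ennreal ((x + y)\<^sup>2) \<le> ennreal (2 * x\<^sup>2 + 2 * y\<^sup>2)" by (rule ennreal_leI)
  also have "\<dots> = 2 * ennreal (x\<^sup>2) + 2 * ennreal (y\<^sup>2)"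
    by (simp add: ennreal_plus ennreal_mult)
  finally show ?thesis using xy by (simp add: ennreal_plus[symmetric] ennreal_power del: ennreal_plus)
qed (auto simp: top_add)

lemma norm_scale_le: "\<bar>c\<bar> \<le> 1 \<Longrightarrow> norm (c *\<^sub>R v) \<le> norm v"
  by (simp add: mult_left_le_one_le)

context onb begin

lemma sand_bound:
  fixes R :: "real \<Rightarrow> 'h \<Rightarrow> 'h" and r :: "real \<Rightarrow> 'h" and Q :: "'h \<Rightarrow> 'h"
  assumes cl: "closure (span (range b)) = UNIV" and Rl: "bounded_linear (R y)"
    and Q: "linear Q" and Qb: "\<forall>x. norm (Q x) \<le> \<tau> * norm x" and \<tau>: "0 < \<tau>"
    and f: "0 \<le> f y" and e: "0 < e"
  shows "hs_norm b (\<lambda>u. cond_cov R r y (Q (cond_cov R r y u))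
            - cond_cov_trunc f e R r y (Q (cond_cov_trunc f e R r y u)))
       \<le> ennreal (2 * \<tau>) * ((hs_norm b (R y) + ennreal ((norm (r y))\<^sup>2))\<^sup>2 * indicator {y. f y < e} y)"
proof (cases "f y < e")
  case False
  then have "f y / max (f y) e = 1" using e by auto
  then have "cond_cov_trunc f e R r y = cond_cov R r y"
    by (simp add: cond_cov_trunc_def cond_cov_def R_trunc_def r_trunc_def fun_eq_iff)
  then show ?thesis by (simp add: hs_zero)
next
  case True
  define l where "l = f y / e"
  have l: "0 \<le> l" "l \<le> 1" using True f e by (auto simp: l_def)
  have la: "\<bar>l\<bar> \<le> 1" "\<bar>l * l\<bar> \<le> 1" "\<bar>1 - l\<bar> \<le> 1" "\<bar>1 - l * l\<bar> \<le> 1"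
    using l by (auto simp: abs_le_iff mult_le_one)
  have lmax: "f y / max (f y) e = l" using True by (simp add: l_def)
  interpret Rl: bounded_linear "R y" by (rule Rl)
  interpret Ql: linear Q by (rule Q)
  define C where "C = cond_cov R r y"
  define Ce where "Ce = cond_cov_trunc f e R r y"
  have Cu: "C u = R y u - inner (r y) u *\<^sub>R r y" for u by (simp add: C_def cond_cov_def tens_def)
  have Ceu: "Ce u = l *\<^sub>R R y u - (l * l * inner (r y) u) *\<^sub>R r y" for u
    by (simp add: Ce_def cond_cov_trunc_def cond_cov_def tens_def R_trunc_def r_trunc_def lmax)
  have CCe: "C u - Ce u = (1 - l) *\<^sub>R R y u - (1 - l * l) *\<^sub>R (inner (r y) u *\<^sub>R r y)" for u
    by (simp add: Cu Ceu algebra_simps)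
  have Cel: "Ce (a - c) = Ce a - Ce c" for a c by (simp add: Ceu Rl.diff inner_diff_right algebra_simps)
  have ind: "indicator {y. f y < e} y = (1::ennreal)" using True by simp
  show ?thesis
  proof (cases "hs_norm b (R y)")
    case top
    then show ?thesis using \<tau> by (simp add: ind ennreal_mult_top)
  next
    case (real h)
    then have h: "0 \<le> h" "hs_norm b (R y) = ennreal h" by auto
    define \<rho> where "\<rho> = (norm (r y))\<^sup>2"
    have \<rho>: "0 \<le> \<rho>" by (simp add: \<rho>_def)
    have Rb: "norm (R y w) \<le> h * norm w" for w
      using op_bound[OF cl Rl _ h(1)] h(2) by simp
    have tb: "norm (inner (r y) w *\<^sub>R r y) \<le> \<rho> * norm w" for w
    proof -
      have "norm (inner (r y) w *\<^sub>R r y) = \<bar>inner (r y) w\<bar> * norm (r y)" by simp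
      also have "\<dots> \<le> (norm (r y) * norm w) * norm (r y)"
        by (intro mult_right_mono Cauchy_Schwarz_ineq2) auto
      finally show ?thesis by (simp add: \<rho>_def power2_eq_square mult_ac)
    qed
    have Ceb: "norm (Ce w) \<le> (h + \<rho>) * norm w" for w
    proof -
      have "norm (Ce w) \<le> norm (l *\<^sub>R R y w) + norm ((l * l) *\<^sub>R (inner (r y) w *\<^sub>R r y))"
        unfolding Ceu by (metis norm_triangle_ineq4 scaleR_scaleR)
      also have "\<dots> \<le> norm (R y w) + norm (inner (r y) w *\<^sub>R r y)"
        using la by (intro add_mono norm_scale_le)
      also have "\<dots> \<le> h * norm w + \<rho> * norm w" using Rb[of w] tb[of w] by (rule add_mono)
      finally show ?thesis by (simp add: algebra_simps)
    qed
    have Db: "norm (C w - Ce w) \<le> (h + \<rho>) * norm w" for w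
    proof -
      have "norm (C w - Ce w) \<le> norm ((1 - l) *\<^sub>R R y w) + norm ((1 - l * l) *\<^sub>R (inner (r y) w *\<^sub>R r y))"
        unfolding CCe by (rule norm_triangle_ineq4)
      also have "\<dots> \<le> norm (R y w) + norm (inner (r y) w *\<^sub>R r y)"
        using la by (intro add_mono norm_scale_le)
      also have "\<dots> \<le> h * norm w + \<rho> * norm w" using Rb[of w] tb[of w] by (rule add_mono)
      finally show ?thesis by (simp add: algebra_simps)
    qed
    have hsC: "hs_norm b C \<le> ennreal (h + \<rho>)"
    proof -
      have "hs_norm b C \<le> hs_norm b (R y) + hs_norm b (tens (r y) (r y))"
      proof (rule hs_triangle_gen)
        fix k show "norm (C (b k)) \<le> norm (R y (b k)) + norm (tens (r y) (r y) (b k))"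
          using norm_triangle_ineq4[of "R y (b k)" "inner (r y) (b k) *\<^sub>R r y"] by (simp add: Cu tens_def)
      qed
      also have "\<dots> \<le> ennreal h + ennreal \<rho>" unfolding h(2) \<rho>_def by (intro add_left_mono hs_tens)
      finally show ?thesis using h \<rho> by (simp add: ennreal_plus)
    qed
    have hsD: "hs_norm b (\<lambda>u. C u - Ce u) \<le> ennreal (h + \<rho>)"
    proof -
      have "hs_norm b (\<lambda>u. C u - Ce u) \<le> hs_norm b (R y) + hs_norm b (tens (r y) (r y))"
      proof (rule hs_triangle_gen)
        fix k
        have "norm (C (b k) - Ce (b k)) \<le> norm ((1 - l) *\<^sub>R R y (b k)) + norm ((1 - l * l) *\<^sub>R (inner (r y) (b k) *\<^sub>R r y))"
          unfolding CCe by (rule norm_triangle_ineq4)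
        also have "\<dots> \<le> norm (R y (b k)) + norm (inner (r y) (b k) *\<^sub>R r y)"
          using la by (intro add_mono norm_scale_le)
        finally show "norm (C (b k) - Ce (b k)) \<le> norm (R y (b k)) + norm (tens (r y) (r y) (b k))"
          by (simp add: tens_def)
      qed
      also have "\<dots> \<le> ennreal h + ennreal \<rho>" unfolding h(2) \<rho>_def by (intro add_left_mono hs_tens)
      finally show ?thesis using h \<rho> by (simp add: ennreal_plus)
    qed
    have eq: "(\<lambda>u. C (Q (C u)) - Ce (Q (Ce u))) = (\<lambda>u. (C (Q (C u)) - Ce (Q (C u))) + Ce (Q (C u - Ce u)))"
      by (simp add: fun_eq_iff Ql.diff Cel)
    have F1: "hs_norm b (\<lambda>u. C (Q (C u)) - Ce (Q (C u))) \<le> ennreal ((h + \<rho>) * \<tau>) * hs_norm b C"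
    proof (rule hs_mono_scale)
      fix k
      have "norm (C (Q (C (b k))) - Ce (Q (C (b k)))) \<le> (h + \<rho>) * norm (Q (C (b k)))" by (rule Db)
      also have "\<dots> \<le> (h + \<rho>) * (\<tau> * norm (C (b k)))" using Qb h \<rho> by (intro mult_left_mono) auto
      finally show "norm (C (Q (C (b k))) - Ce (Q (C (b k)))) \<le> (h + \<rho>) * \<tau> * norm (C (b k))" by (simp add: mult_ac)
    qed (use h \<rho> \<tau> in auto)
    have F2: "hs_norm b (\<lambda>u. Ce (Q (C u - Ce u))) \<le> ennreal ((h + \<rho>) * \<tau>) * hs_norm b (\<lambda>u. C u - Ce u)"
    proof (rule hs_mono_scale)
      fix k
      have "norm (Ce (Q (C (b k) - Ce (b k)))) \<le> (h + \<rho>) * norm (Q (C (b k) - Ce (b k)))" by (rule Ceb)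
      also have "\<dots> \<le> (h + \<rho>) * (\<tau> * norm (C (b k) - Ce (b k)))" using Qb h \<rho> by (intro mult_left_mono) auto
      finally show "norm (Ce (Q (C (b k) - Ce (b k)))) \<le> (h + \<rho>) * \<tau> * norm (C (b k) - Ce (b k))" by (simp add: mult_ac)
    qed (use h \<rho> \<tau> in auto)
    have "hs_norm b (\<lambda>u. C (Q (C u)) - Ce (Q (Ce u)))
        \<le> hs_norm b (\<lambda>u. C (Q (C u)) - Ce (Q (C u))) + hs_norm b (\<lambda>u. Ce (Q (C u - Ce u)))"
      unfolding eq by (rule hs_add)
    also have "\<dots> \<le> ennreal ((h + \<rho>) * \<tau>) * ennreal (h + \<rho>) + ennreal ((h + \<rho>) * \<tau>) * ennreal (h + \<rho>)"
      by (intro add_mono order_trans[OF F1] order_trans[OF F2] mult_left_mono hsC hsD) auto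
    also have "\<dots> = ennreal (2 * \<tau>) * ((hs_norm b (R y) + ennreal ((norm (r y))\<^sup>2))\<^sup>2 * indicator {y. f y < e} y)"
    proof -
      have a: "0 \<le> h + \<rho>" using h \<rho> by simp
      have s1: "ennreal ((h + \<rho>) * \<tau>) * ennreal (h + \<rho>) + ennreal ((h + \<rho>) * \<tau>) * ennreal (h + \<rho>)
          = ennreal (2 * \<tau> * (h + \<rho>)\<^sup>2)"
        using a \<tau> by (simp add: ennreal_mult'[symmetric] ennreal_plus[symmetric] power2_eq_square mult_ac del: ennreal_plus)
      have s2: "ennreal (2 * \<tau> * (h + \<rho>)\<^sup>2) = ennreal (2 * \<tau>) * (ennreal (h + \<rho>))\<^sup>2"
        using a \<tau> by (simp add: ennreal_mult' ennreal_power)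
      have e3: "ennreal (h + \<rho>) = hs_norm b (R y) + ennreal ((norm (r y))\<^sup>2)"
        using h \<rho> unfolding \<rho>_def by (simp add: ennreal_plus)
      show ?thesis unfolding ind mult_1_right e3[symmetric] using s1 s2 by simp
    qed
    finally show ?thesis unfolding C_def Ce_def .
  qed
qed

end

context onb begin

lemma norm_meas:
  fixes R :: "real \<Rightarrow> 'h \<Rightarrow> 'h"
  assumes cl: "closure (span (range b)) = UNIV"
    and Rm: "\<forall>u v. (\<lambda>y. inner (R y u) v) \<in> borel_measurable borel"
  shows "(\<lambda>y. norm (R y u)) \<in> borel_measurable borel"
proof -
  have "(\<lambda>y. (norm (R y u))\<^sup>2) \<in> borel_measurable borel"
  proof (rule borel_measurable_LIMSEQ_real[where u="\<lambda>i y. \<Sum>m<i. (inner (R y u) (b m))\<^sup>2"])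
    fix y show "(\<lambda>i. \<Sum>m<i. (inner (R y u) (b m))\<^sup>2) \<longlonglongrightarrow> (norm (R y u))\<^sup>2"
      using parseval[OF cl, of "R y u"] unfolding sums_def .
  next
    fix i show "(\<lambda>y. \<Sum>m<i. (inner (R y u) (b m))\<^sup>2) \<in> borel_measurable borel"
      using Rm by (intro borel_measurable_sum borel_measurable_power) auto
  qed
  then have "(\<lambda>y. sqrt ((norm (R y u))\<^sup>2)) \<in> borel_measurable borel" by measurable
  then show ?thesis by simp
qed

lemma hs_meas:
  fixes R :: "real \<Rightarrow> 'h \<Rightarrow> 'h"
  assumes cl: "closure (span (range b)) = UNIV"
    and Rm: "\<forall>u v. (\<lambda>y. inner (R y u) v) \<in> borel_measurable borel"
  shows "(\<lambda>y. hs_norm b (R y)) \<in> borel_measurable borel"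
proof -
  have "(\<lambda>y. ennreal (hsL b (R y) N)) \<in> borel_measurable borel" for N
  proof -
    have "\<And>k. (\<lambda>y. norm (R y (b k))) \<in> borel_measurable borel" by (rule norm_meas[OF cl Rm])
    then show ?thesis unfolding hsL_def L2_set_def by measurable
  qed
  then have "(\<lambda>y. SUP N. ennreal (hsL b (R y) N)) \<in> borel_measurable borel"
    by (intro borel_measurable_SUP) auto
  then show ?thesis by (simp add: hs_sup)
qed

end

lemma test_meas:
  fixes f :: "real \<Rightarrow> real" and H :: "real \<Rightarrow> ennreal" and r :: "real \<Rightarrow> 'h::{real_inner, second_countable_topology}"
  assumes [measurable]: "f \<in> borel_measurable borel" "H \<in> borel_measurable borel" "r \<in> borel_measurable borel"
  shows "(\<lambda>y. (2 * (H y)\<^sup>2 + 2 * ennreal (norm (r y) ^ 4)) * indicator {y. f y < c} y) \<in> borel_measurable borel"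
  by measurable

theorem lemma4:
  fixes M :: "'w measure"
    and X :: "'w \<Rightarrow> 'h::{real_inner,complete_space,second_countable_topology}"
    and Y :: "'w \<Rightarrow> real"
    and f :: "real \<Rightarrow> real" and r :: "real \<Rightarrow> 'h" and R :: "real \<Rightarrow> 'h \<Rightarrow> 'h"
    and \<Gamma> :: "'h \<Rightarrow> 'h" and e :: "nat \<Rightarrow> real" and b :: "nat \<Rightarrow> 'h" and D :: "nat \<Rightarrow> nat"
    and Xs :: "nat \<Rightarrow> 'w \<Rightarrow> 'h" and Ys :: "nat \<Rightarrow> 'w \<Rightarrow> real"
    and PiHat :: "nat \<Rightarrow> 'w \<Rightarrow> 'h \<Rightarrow> 'h"
  assumes P: "prob_space M"
    and X_meas: "X \<in> borel_measurable M" and Y_meas: "Y \<in> borel_measurable M"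
    and X_mean: "integrable M X" "integral\<^sup>L M X = 0"
    and f_nonneg: "\<forall>y. 0 \<le> f y"
    and f_density: "distributed M lborel Y (\<lambda>y. ennreal (f y))"
    and b_orthonormal: "\<forall>i j. inner (b i) (b j) = (if i = j then 1 else 0)"
    and b_complete: "closure (span (range b)) = UNIV"
    and Gamma_lin: "bounded_linear \<Gamma>"
    and Gamma_def: "\<forall>u v. integral\<^sup>L M (\<lambda>\<omega>. inner (X \<omega>) u * inner (X \<omega>) v) = inner (\<Gamma> u) v"
    and Gamma_nonsing: "inj \<Gamma>"
    and Gamma_posdef: "\<forall>x. x \<noteq> 0 \<longrightarrow> 0 < inner (\<Gamma> x) x"
    and r_meas: "r \<in> borel_measurable borel"
    and r_condexp: "\<forall>u. \<forall>B\<in>sets borel.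
          set_integrable lborel B (\<lambda>y. f y * inner (r y) u) \<and>
          integral\<^sup>L M (\<lambda>\<omega>. indicator B (Y \<omega>) * inner (X \<omega>) u)
            = (LINT y:B|lborel. f y * inner (r y) u)"
    and R_lin: "\<forall>y. bounded_linear (R y)"
    and R_meas: "\<forall>u v. (\<lambda>y. inner (R y u) v) \<in> borel_measurable borel"
    and R_condexp: "\<forall>u v. \<forall>B\<in>sets borel.
          set_integrable lborel B (\<lambda>y. f y * inner (R y u) v) \<and>
          integral\<^sup>L M (\<lambda>\<omega>. indicator B (Y \<omega>) * (inner (X \<omega>) u * inner (X \<omega>) v))
            = (LINT y:B|lborel. f y * inner (R y u) v)"
    and e_pos: "\<forall>n. 0 < e n" and e_lim: "e \<longlonglongrightarrow> 0"
    and D_pos: "\<forall>n. 1 \<le> D n" and D_lim: "filterlim D at_top sequentially"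
    and sample_indep: "prob_space.indep_vars M (\<lambda>_. borel) (\<lambda>i \<omega>. (Xs i \<omega>, Ys i \<omega>)) UNIV"
    and sample_distr: "\<forall>i. distr M borel (\<lambda>\<omega>. (Xs i \<omega>, Ys i \<omega>)) = distr M borel (\<lambda>\<omega>. (X \<omega>, Y \<omega>))"
    and PiHat_proj: "\<forall>n \<omega>. orth_proj_dim (PiHat n \<omega>) (D n)"
    and A3_moment: "(\<integral>\<^sup>+\<omega>. ennreal (norm (X \<omega>) ^ 4) \<partial>M) < \<infinity>"
    and A10_1: "(\<lambda>n. ennreal (sqrt (real n)) *
          (\<integral>\<^sup>+\<omega>. hs_norm b (R (Y \<omega>)) ^ 2 * indicator {y. f y < e n} (Y \<omega>) \<partial>M)) \<longlonglongrightarrow> 0"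
    and A10_2: "(\<lambda>n. ennreal (sqrt (real n)) *
          (\<integral>\<^sup>+\<omega>. hs_norm b (R (Y \<omega>)) * ennreal ((norm (r (Y \<omega>)))\<^sup>2)
                   * indicator {y. f y < e n} (Y \<omega>) \<partial>M)) \<longlonglongrightarrow> 0"
    and A10_3: "(\<lambda>n. ennreal (sqrt (real n)) *
          (\<integral>\<^sup>+\<omega>. ennreal ((norm (r (Y \<omega>))) ^ 4) * indicator {y. f y < e n} (Y \<omega>) \<partial>M)) \<longlonglongrightarrow> 0"
    and hyp: "small_op M
          (\<lambda>n \<omega>. onorm (\<lambda>u. (PiHat n \<omega> \<circ> gamma_hat n (\<lambda>i. Xs i \<omega>) \<circ> PiHat n \<omega>) u
                            - gamma_D b (D n) \<Gamma> u))
          (\<lambda>n. min_pos_eig (gamma_D b (D n) \<Gamma>))"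
  shows "big_Op M
          (\<lambda>n \<omega>. hs_norm b (\<lambda>u.
              avg_sandwich n (cond_cov R r)
                 (pseudo_inv (PiHat n \<omega> \<circ> gamma_hat n (\<lambda>i. Xs i \<omega>) \<circ> PiHat n \<omega>)) (\<lambda>j. Ys j \<omega>) u
            - avg_sandwich n (cond_cov_trunc f (e n) R r)
                 (pseudo_inv (PiHat n \<omega> \<circ> gamma_hat n (\<lambda>i. Xs i \<omega>) \<circ> PiHat n \<omega>)) (\<lambda>j. Ys j \<omega>) u))
          (\<lambda>n. 1 / (min_pos_eig (gamma_D b (D n) \<Gamma>) * sqrt (real n)))"
proof -
  interpret P: prob_space M by (rule P)
  interpret onb b using b_orthonormal by unfold_locales
  note cl = b_complete
  have Gsym: "symop \<Gamma>"
    unfolding symop_def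
  proof (intro conjI allI Gamma_lin)
    fix x y
    have "inner (\<Gamma> x) y = (\<integral>\<omega>. inner (X \<omega>) x * inner (X \<omega>) y \<partial>M)" using Gamma_def by simp
    also have "\<dots> = (\<integral>\<omega>. inner (X \<omega>) y * inner (X \<omega>) x \<partial>M)" by (simp add: mult.commute)
    also have "\<dots> = inner (\<Gamma> y) x" using Gamma_def by simp
    also have "\<dots> = inner x (\<Gamma> y)" by (rule inner_commute)
    finally show "inner (\<Gamma> x) y = inner x (\<Gamma> y)" .
  qed
  define t where "t n = min_pos_eig (gamma_D b (D n) \<Gamma>)" for n
  have tpos: "0 < t n" for n
    unfolding t_def using gamma_D_eig(1)[OF Gsym Gamma_posdef] D_pos by blast
  define g where "g n y = (hs_norm b (R y) + ennreal ((norm (r y))\<^sup>2))\<^sup>2 * indicator {y. f y < e n} y" for n y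
  define g' where "g' n y = (2 * (hs_norm b (R y))\<^sup>2 + 2 * ennreal (norm (r y) ^ 4)) * indicator {y. f y < e n} y" for n y
  have gg': "g n y \<le> g' n y" for n y
  proof -
    have "(ennreal ((norm (r y))\<^sup>2))\<^sup>2 = ennreal (norm (r y) ^ 4)" by (simp add: ennreal_power)
    then show ?thesis unfolding g_def g'_def
      using ennreal_sq_sum_le[of "hs_norm b (R y)" "ennreal ((norm (r y))\<^sup>2)"]
      by (intro mult_right_mono) auto
  qed
  have fm: "f \<in> borel_measurable borel"
  proof -
    have "(\<lambda>y. ennreal (f y)) \<in> borel_measurable lborel" using f_density by (simp add: distributed_def)
    then have "(\<lambda>y. enn2real (ennreal (f y))) \<in> borel_measurable borel"
      by (intro borel_measurable_enn2real) (simp add: measurable_lborel1)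
    then show ?thesis using f_nonneg by simp
  qed
  have hsm: "(\<lambda>y. hs_norm b (R y)) \<in> borel_measurable borel" by (rule hs_meas[OF cl R_meas])
  note [measurable] = fm hsm r_meas
  have g'm[measurable]: "g' n \<in> borel_measurable borel" for n unfolding g'_def by measurable
  have pm: "(\<lambda>\<omega>. (Xs j \<omega>, Ys j \<omega>)) \<in> borel_measurable M" for j
    using sample_indep unfolding P.indep_vars_def by auto
  have sndm: "(\<lambda>x::'h \<times> real. snd x) \<in> borel_measurable borel"
    by (intro borel_measurable_continuous_onI continuous_intros)
  have Ysm[measurable]: "Ys j \<in> borel_measurable M" for j
    using measurable_compose[OF pm sndm] by simp
  have XYm: "(\<lambda>\<omega>. (X \<omega>, Y \<omega>)) \<in> borel_measurable M"
    by (rule borel_measurable_Pair[OF X_meas Y_meas])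
  note [measurable] = Y_meas
  have int_eq: "(\<integral>\<^sup>+\<omega>. g' n (Ys j \<omega>) \<partial>M) = (\<integral>\<^sup>+\<omega>. g' n (Y \<omega>) \<partial>M)" for n j
  proof -
    have gs: "(\<lambda>x::'h \<times> real. g' n (snd x)) \<in> borel_measurable borel" by (rule measurable_compose[OF sndm g'm])
    have "(\<integral>\<^sup>+\<omega>. g' n (Ys j \<omega>) \<partial>M) = (\<integral>\<^sup>+x. g' n (snd x) \<partial>distr M borel (\<lambda>\<omega>. (Xs j \<omega>, Ys j \<omega>)))"
      using gs by (subst nn_integral_distr[OF pm]) auto
    also have "\<dots> = (\<integral>\<^sup>+x. g' n (snd x) \<partial>distr M borel (\<lambda>\<omega>. (X \<omega>, Y \<omega>)))"
      using sample_distr by simp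
    also have "\<dots> = (\<integral>\<^sup>+\<omega>. g' n (Y \<omega>) \<partial>M)"
      using gs by (subst nn_integral_distr[OF XYm]) auto
    finally show ?thesis .
  qed
  define I where "I n = (\<integral>\<^sup>+\<omega>. g' n (Y \<omega>) \<partial>M)" for n
  define I1 where "I1 n = (\<integral>\<^sup>+\<omega>. hs_norm b (R (Y \<omega>)) ^ 2 * indicator {y. f y < e n} (Y \<omega>) \<partial>M)" for n
  define I3 where "I3 n = (\<integral>\<^sup>+\<omega>. ennreal ((norm (r (Y \<omega>))) ^ 4) * indicator {y. f y < e n} (Y \<omega>) \<partial>M)" for n
  have Isplit: "I n = 2 * I1 n + 2 * I3 n" for n
  proof -
    have "I n = (\<integral>\<^sup>+\<omega>. 2 * (hs_norm b (R (Y \<omega>)) ^ 2 * indicator {y. f y < e n} (Y \<omega>))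
                     + 2 * (ennreal ((norm (r (Y \<omega>))) ^ 4) * indicator {y. f y < e n} (Y \<omega>)) \<partial>M)"
      unfolding I_def g'_def by (intro nn_integral_cong) (simp add: distrib_right mult.assoc)
    also have "\<dots> = 2 * I1 n + 2 * I3 n"
      unfolding I1_def I3_def by (subst nn_integral_add) (measurable, simp add: nn_integral_cmult)
    finally show ?thesis .
  qed
  have lim: "(\<lambda>n. ennreal (4 * sqrt (real n)) * I n) \<longlonglongrightarrow> 0"
  proof -
    have eq: "ennreal (4 * sqrt (real n)) * I n
        = 8 * (ennreal (sqrt (real n)) * I1 n) + 8 * (ennreal (sqrt (real n)) * I3 n)" for n
      unfolding Isplit by (simp add: ennreal_mult' distrib_left mult_ac)
    have "(\<lambda>n. 8 * (ennreal (sqrt (real n)) * I1 n) + 8 * (ennreal (sqrt (real n)) * I3 n))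
        \<longlonglongrightarrow> 8 * 0 + 8 * 0"
      using A10_1 A10_3 unfolding I1_def I3_def
      by (intro tendsto_add ennreal_tendsto_cmult) auto
    then show ?thesis unfolding eq by simp
  qed
  show ?thesis
    unfolding big_Op_def
  proof (intro allI impI exI[of _ 1])
    fix \<delta> :: real assume \<delta>: "0 < \<delta>"
    have ev1: "eventually (\<lambda>n. outer_prob_le M {\<omega>. (1/2) * t n < \<bar>onorm (\<lambda>u. (PiHat n \<omega> \<circ> gamma_hat n (\<lambda>i. Xs i \<omega>) \<circ> PiHat n \<omega>) u
                            - gamma_D b (D n) \<Gamma> u)\<bar>} (\<delta>/2)) sequentially"
      unfolding t_def by (rule hyp[unfolded small_op_def, rule_format]) (use \<delta> in auto)
    have ev2: "eventually (\<lambda>n. ennreal (4 * sqrt (real n)) * I n < ennreal (\<delta>/2)) sequentially"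
      using order_tendstoD(2)[OF lim] \<delta> by simp
    have ev3: "eventually (\<lambda>n. 1 \<le> n) sequentially" by (rule eventually_ge_at_top)
    show "eventually (\<lambda>n. outer_prob_le M {\<omega>. ennreal (1 * (1 / (min_pos_eig (gamma_D b (D n) \<Gamma>) * sqrt (real n))))
        < hs_norm b (\<lambda>u. avg_sandwich n (cond_cov R r)
                 (pseudo_inv (PiHat n \<omega> \<circ> gamma_hat n (\<lambda>i. Xs i \<omega>) \<circ> PiHat n \<omega>)) (\<lambda>j. Ys j \<omega>) u
            - avg_sandwich n (cond_cov_trunc f (e n) R r)
                 (pseudo_inv (PiHat n \<omega> \<circ> gamma_hat n (\<lambda>i. Xs i \<omega>) \<circ> PiHat n \<omega>)) (\<lambda>j. Ys j \<omega>) u)} \<delta>) sequentially"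
      using ev1 ev2 ev3
    proof eventually_elim
      case (elim n)
      have n1: "1 \<le> n" using elim(3) .
      have tn: "0 < t n" by (rule tpos)
      have sn: "0 < sqrt (real n)" using n1 by simp
      obtain B1 where B1: "B1 \<in> sets M" "{\<omega>. (1/2) * t n < \<bar>onorm (\<lambda>u. (PiHat n \<omega> \<circ> gamma_hat n (\<lambda>i. Xs i \<omega>) \<circ> PiHat n \<omega>) u
                            - gamma_D b (D n) \<Gamma> u)\<bar>} \<inter> space M \<subseteq> B1" "measure M B1 \<le> \<delta>/2"
        using elim(1) unfolding outer_prob_le_def by blast
      define S where "S \<omega> = ennreal (1 / real n) * (\<Sum>j<n. g' n (Ys j \<omega>))" for \<omega>
      have Sm[measurable]: "S \<in> borel_measurable M" unfolding S_def by measurable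
      define B2 where "B2 = {\<omega> \<in> space M. 1 \<le> ennreal (4 * sqrt (real n)) * S \<omega>}"
      have B2s: "B2 \<in> sets M" unfolding B2_def by measurable
      have intS: "(\<integral>\<^sup>+\<omega>. S \<omega> \<partial>M) = I n"
      proof -
        have "(\<integral>\<^sup>+\<omega>. S \<omega> \<partial>M) = ennreal (1 / real n) * (\<integral>\<^sup>+\<omega>. (\<Sum>j<n. g' n (Ys j \<omega>)) \<partial>M)"
          unfolding S_def by (rule nn_integral_cmult) measurable
        also have "(\<integral>\<^sup>+\<omega>. (\<Sum>j<n. g' n (Ys j \<omega>)) \<partial>M) = (\<Sum>j<n. \<integral>\<^sup>+\<omega>. g' n (Ys j \<omega>) \<partial>M)"
          by (rule nn_integral_sum) measurable
        also have "\<dots> = of_nat n * I n" by (simp add: int_eq I_def)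
        also have "ennreal (1 / real n) * (of_nat n * I n) = (ennreal (1 / real n) * ennreal (real n)) * I n"
          by (simp add: ennreal_of_nat_eq_real_of_nat mult.assoc)
        also have "ennreal (1 / real n) * ennreal (real n) = 1"
          using n1 by (simp add: ennreal_mult'[symmetric])
        finally show ?thesis by simp
      qed
      have mB2: "emeasure M B2 \<le> ennreal (4 * sqrt (real n)) * I n"
      proof -
        have "emeasure M B2 \<le> ennreal (4 * sqrt (real n)) * set_nn_integral M (space M) S"
          unfolding B2_def by (rule nn_integral_Markov_inequality) measurable
        also have "set_nn_integral M (space M) S = (\<integral>\<^sup>+\<omega>. S \<omega> \<partial>M)"
          by (rule nn_integral_cong) simp
        finally show ?thesis using intS by simp
      qed
      have B2le: "measure M B2 \<le> \<delta>/2"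
      proof -
        have "ennreal (measure M B2) < ennreal (\<delta>/2)"
          using mB2 elim(2) P.emeasure_eq_measure[of B2] by simp
        then show ?thesis using \<delta> by (simp add: ennreal_less_iff)
      qed
      show ?case unfolding outer_prob_le_def
      proof (intro bexI[of _ "B1 \<union> B2"] conjI)
        show "B1 \<union> B2 \<in> sets M" using B1(1) B2s by auto
        show "measure M (B1 \<union> B2) \<le> \<delta>" using measure_Un_le[OF B1(1) B2s] B1(3) B2le by simp
        show "{\<omega>. ennreal (1 * (1 / (min_pos_eig (gamma_D b (D n) \<Gamma>) * sqrt (real n))))
        < hs_norm b (\<lambda>u. avg_sandwich n (cond_cov R r)
                 (pseudo_inv (PiHat n \<omega> \<circ> gamma_hat n (\<lambda>i. Xs i \<omega>) \<circ> PiHat n \<omega>)) (\<lambda>j. Ys j \<omega>) u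
            - avg_sandwich n (cond_cov_trunc f (e n) R r)
                 (pseudo_inv (PiHat n \<omega> \<circ> gamma_hat n (\<lambda>i. Xs i \<omega>) \<circ> PiHat n \<omega>)) (\<lambda>j. Ys j \<omega>) u)} \<inter> space M
          \<subseteq> B1 \<union> B2"
        proof
          fix \<omega> assume om: "\<omega> \<in> {\<omega>. ennreal (1 * (1 / (min_pos_eig (gamma_D b (D n) \<Gamma>) * sqrt (real n))))
        < hs_norm b (\<lambda>u. avg_sandwich n (cond_cov R r)
                 (pseudo_inv (PiHat n \<omega> \<circ> gamma_hat n (\<lambda>i. Xs i \<omega>) \<circ> PiHat n \<omega>)) (\<lambda>j. Ys j \<omega>) u
            - avg_sandwich n (cond_cov_trunc f (e n) R r)
                 (pseudo_inv (PiHat n \<omega> \<circ> gamma_hat n (\<lambda>i. Xs i \<omega>) \<circ> PiHat n \<omega>)) (\<lambda>j. Ys j \<omega>) u)} \<inter> space M"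
          show "\<omega> \<in> B1 \<union> B2"
          proof (cases "\<omega> \<in> B1")
            case True then show ?thesis by simp
          next
            case False
            define Th where "Th = PiHat n \<omega> \<circ> gamma_hat n (\<lambda>i. Xs i \<omega>) \<circ> PiHat n \<omega>"
            define Gn where "Gn = gamma_D b (D n) \<Gamma>"
            have good: "\<not> ((1/2) * t n < \<bar>onorm (\<lambda>u. Th u - Gn u)\<bar>)"
              using B1(2) om False unfolding Th_def Gn_def by blast
            obtain B where PB: "finite B" "independent B" "card B = D n" "isproj (PiHat n \<omega>) (span B)"
              using orth_proj_dim_isproj[OF PiHat_proj[rule_format]] by blast
            have Gbl: "bounded_linear Gn" unfolding Gn_def gamma_D_def
              by (rule sandwich_bl[OF proj_first_isproj Gamma_lin])
            have Dbl: "bounded_linear (\<lambda>u. Th u - Gn u)" unfolding Th_def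
              by (rule bounded_linear_sub[OF sandwich_bl[OF PB(4) gamma_hat_bl] Gbl])
            have on: "onorm (\<lambda>u. Th u - Gn u) \<le> t n / 2" using good by simp
            have close: "\<forall>x. norm (Th x - Gn x) \<le> (min_pos_eig Gn / 2) * norm x"
            proof
              fix x
              have "norm (Th x - Gn x) \<le> onorm (\<lambda>u. Th u - Gn u) * norm x" by (rule onorm[OF Dbl])
              also have "\<dots> \<le> (t n / 2) * norm x" using on by (intro mult_right_mono) auto
              finally show "norm (Th x - Gn x) \<le> (min_pos_eig Gn / 2) * norm x"
                by (simp add: t_def Gn_def)
            qed
            have psd: "\<forall>u. 0 \<le> inner (gamma_hat n (\<lambda>i. Xs i \<omega>) u) u" using gamma_hat_psd by blast
            note pg = pinv_good[OF PB(4) PB(1) PB(2) PB(3) gamma_hat_sym psd Gsym Gamma_posdef D_pos[rule_format],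
                unfolded Th_def[symmetric] Gn_def[symmetric], OF close]
            define Q where "Q = pseudo_inv Th"
            have linQ: "linear Q" using pg(1) unfolding Q_def .
            have Qb: "\<forall>x. norm (Q x) \<le> (2 / t n) * norm x" using pg(2) unfolding Q_def t_def Gn_def .
            have \<tau>: "0 < 2 / t n" using tn by simp
            define Dj where "Dj j u = cond_cov R r (Ys j \<omega>) (Q (cond_cov R r (Ys j \<omega>) u))
                 - cond_cov_trunc f (e n) R r (Ys j \<omega>) (Q (cond_cov_trunc f (e n) R r (Ys j \<omega>) u))" for j u
            have eqZ: "(\<lambda>u. avg_sandwich n (cond_cov R r) Q (\<lambda>j. Ys j \<omega>) u
                  - avg_sandwich n (cond_cov_trunc f (e n) R r) Q (\<lambda>j. Ys j \<omega>) u)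
                = (\<lambda>u. (1 / real n) *\<^sub>R (\<Sum>j<n. Dj j u))"
              by (simp add: avg_sandwich_def fun_eq_iff scaleR_diff_right sum_subtractf Dj_def)
            have Dbound: "hs_norm b (Dj j) \<le> ennreal (2 * (2 / t n)) * g' n (Ys j \<omega>)" for j
            proof -
              have "hs_norm b (Dj j) \<le> ennreal (2 * (2 / t n)) * g n (Ys j \<omega>)"
                unfolding Dj_def g_def
                by (rule sand_bound[where R=R and y="Ys j \<omega>" and r=r and f=f and e="e n",
                    OF cl R_lin[rule_format] linQ Qb \<tau> f_nonneg[rule_format] e_pos[rule_format]])
              also have "\<dots> \<le> ennreal (2 * (2 / t n)) * g' n (Ys j \<omega>)" by (intro mult_left_mono gg') auto
              finally show ?thesis .
            qed
            have "hs_norm b (\<lambda>u. (1 / real n) *\<^sub>R (\<Sum>j<n. Dj j u))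
                \<le> ennreal \<bar>1 / real n\<bar> * hs_norm b (\<lambda>u. \<Sum>j<n. Dj j u)" by (rule hs_scale)
            also have "\<dots> = ennreal (1 / real n) * hs_norm b (\<lambda>u. \<Sum>j<n. Dj j u)" by simp
            also have "\<dots> \<le> ennreal (1 / real n) * (\<Sum>j<n. hs_norm b (Dj j))"
              by (intro mult_left_mono hs_sum) auto
            also have "\<dots> \<le> ennreal (1 / real n) * (\<Sum>j<n. ennreal (2 * (2 / t n)) * g' n (Ys j \<omega>))"
              by (intro mult_left_mono sum_mono Dbound) auto
            also have "\<dots> = ennreal (4 / t n) * S \<omega>"
              by (simp add: S_def sum_distrib_left sum_distrib_right mult_ac)
            finally have Zb: "hs_norm b (\<lambda>u. avg_sandwich n (cond_cov R r) Q (\<lambda>j. Ys j \<omega>) u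
                  - avg_sandwich n (cond_cov_trunc f (e n) R r) Q (\<lambda>j. Ys j \<omega>) u) \<le> ennreal (4 / t n) * S \<omega>"
              unfolding eqZ .
            have lt: "ennreal (1 / (t n * sqrt (real n))) < ennreal (4 / t n) * S \<omega>"
              using om Zb unfolding Q_def Th_def t_def by (auto intro: less_le_trans)
            have "1 \<le> ennreal (4 * sqrt (real n)) * S \<omega>"
            proof (cases "S \<omega>")
              case top
              then show ?thesis using sn by (simp add: ennreal_mult_top)
            next
              case (real s)
              then have s: "0 \<le> s" "S \<omega> = ennreal s" by auto
              have "ennreal (4 / t n) * ennreal s = ennreal (4 / t n * s)"
                using tn by (intro ennreal_mult'[symmetric]) simp
              then have "ennreal (1 / (t n * sqrt (real n))) < ennreal (4 / t n * s)"
                using lt s by simp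
              then have "1 / (t n * sqrt (real n)) < 4 / t n * s"
                using tn sn by (simp add: ennreal_less_iff)
              then have "1 < 4 * sqrt (real n) * s" using tn sn by (simp add: field_simps)
              then have "1 \<le> ennreal (4 * sqrt (real n) * s)" by (simp add: ennreal_leI)
              then show ?thesis using s sn by (simp add: ennreal_mult')
            qed
            then have "\<omega> \<in> B2" unfolding B2_def using om by auto
            then show ?thesis by simp
          qed
        qed
      qed
    qed
  qed
qed

end
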